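(* For any $n\ge 1$, the map $\rho$ is an isomorphism of posets from $\mathsf{F}(n)$ (with the dexter order) to $(\mathsf{Tr}(n),\preccurlyeq)$.
   Context: A Dyck path of size $m$ is encoded as a word of length $2m$ in $\{0,1\}$ ($1$ = north-east step, $0$ = south-east step) whose prefixes all contain at least as many $1$'s as $0$'s and which has $m$ letters of each kind. A Dyck path $d$ is primitive if whenever $d=xy$ with $x,y$ Dyck paths, $x$ or $y$ is empty. A factor $x$ of $d$ (i.e. $d=pxs$) is a subpath if $x$ is a Dyck path. A subpath $x$ of $d$ is movable if $x$ is primitive and $d=p\,1\,0^{m}\,x\,s$ with $m>0$ and either $s$ empty or $s$ starting with $1$. For such a decomposition and any $\alpha,\beta$ with $\alpha+\beta=m$, $\beta>0$, set $d_{\alpha,\beta}:=p\,1\,0^{\alpha}\,x\,0^{\beta}\,s$. The dexter covering relation on Dyck paths of size $m$ is: $d$ is covered by $d'$ iff $d'=d_{\alpha,\beta}$ for some movable subpath $x$ of $d$ and such $\alpha,\beta$; the dexter order is its reflexive–transitive closure. For $n\ge1$, $\mathsf{F}(n)$ is the interval of Dyck paths of size $n+2$ between $1100(10)^n$ and $1\,1^n\,0^n\,100$ for the dexter order. A valley is a factor $01$, and its height is the ordinate of the point between the $0$ and the $1$. The map $\rho$ on $\mathsf{F}(n)$: reading $d$ from left to right, keep a counter $N_2$ (initially $0$) and build a word $u$ (initially empty): (i) each time two consecutive letters $1$ are read in $d$, except the first two letters of $d$, add $1$ to $N_2$; (ii) each time a valley of height $h$ is read, append $h\,2^{N_2}$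 to $u$ and reset $N_2$ to $0$. Then $\rho(d)$ is the final $u$. A triword of size $n$ is a word $u=u_1\cdots u_n$ with $u_i\in\{0,1,2\}$, $u_1\ne 2$, and such that $u_i=0$ implies $u_j\neq 1$ for all $j>i$; $\mathsf{Tr}(n)$ is their set, ordered componentwise: $u\preccurlyeq v$ iff $u_i\le v_i$ for all $i$. *)

theory Defs
  imports Main
begin

text \<open>Dyck paths are encoded as lists of naturals over the alphabet {0,1}
  (1 = north-east step, 0 = south-east step).\<close>

definition dyck :: "nat list \<Rightarrow> bool" where
  "dyck w \<longleftrightarrow> set w \<subseteq> {0,1} \<and> count_list w 1 = count_list w 0 \<and>
     (\<forall>k \<le> length w. count_list (take k w) 0 \<le> count_list (take k w) 1)"

definition primitive :: "nat list \<Rightarrow> bool" where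
  "primitive d \<longleftrightarrow> dyck d \<and>
     (\<forall>x y. d = x @ y \<and> dyck x \<and> dyck y \<longrightarrow> x = [] \<or> y = [])"

definition dexter_cover :: "nat list \<Rightarrow> nat list \<Rightarrow> bool" where
  "dexter_cover d d' \<longleftrightarrow> dyck d \<and>
     (\<exists>p m x s \<alpha> \<beta>. d = p @ [1] @ replicate m 0 @ x @ s \<and> m > 0 \<and> primitive x \<and>
        (s = [] \<or> hd s = 1) \<and> \<alpha> + \<beta> = m \<and> \<beta> > 0 \<and>
        d' = p @ [1] @ replicate \<alpha> 0 @ x @ replicate \<beta> 0 @ s)"

definition dexter_le :: "nat list \<Rightarrow> nat list \<Rightarrow> bool" where
  "dexter_le = dexter_cover\<^sup>*\<^sup>*"

definition F_bot :: "nat \<Rightarrow> nat list" where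
  "F_bot n = [1,1,0,0] @ concat (replicate n [1,0])"

definition F_top :: "nat \<Rightarrow> nat list" where
  "F_top n = [1] @ replicate n 1 @ replicate n 0 @ [1,0,0]"

definition F :: "nat \<Rightarrow> nat list set" where
  "F n = {d. dyck d \<and> length d = 2 * (n + 2) \<and> dexter_le (F_bot n) d \<and> dexter_le d (F_top n)}"

definition height :: "nat list \<Rightarrow> nat" where
  "height w = count_list w 1 - count_list w 0"

text \<open>One reading step of rho, at position i (0-indexed, i \<ge> 1), i.e. when
  letter d!i is read; the state is (N2, u).\<close>
definition rho_step :: "nat list \<Rightarrow> nat \<Rightarrow> nat \<times> nat list \<Rightarrow> nat \<times> nat list" where
  "rho_step d i st =
     (let (N, u) = st in
      if 2 \<le> i \<and> d ! (i - 1) = 1 \<and> d ! i = 1 then (N + 1, u)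
      else if d ! (i - 1) = 0 \<and> d ! i = 1
        then (0, u @ [height (take i d)] @ replicate N 2)
      else (N, u))"

definition rho :: "nat list \<Rightarrow> nat list" where
  "rho d = snd (fold (rho_step d) [1..<length d] (0, []))"

definition Tr :: "nat \<Rightarrow> nat list set" where
  "Tr n = {u. length u = n \<and> set u \<subseteq> {0,1,2} \<and> u ! 0 \<noteq> 2 \<and>
              (\<forall>i j. i < j \<and> j < n \<and> u ! i = 0 \<longrightarrow> u ! j \<noteq> 1)}"

definition tr_le :: "nat list \<Rightarrow> nat list \<Rightarrow> bool" where
  "tr_le u v \<longleftrightarrow> length u = length v \<and> (\<forall>i < length u. u ! i \<le> v ! i)"

end

theory Submission
  imports Defs
begin



definition dl :: "nat \<Rightarrow> int" where "dl c = (if c = 1 then 1 else -1)"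

fun hf :: "nat list \<Rightarrow> int" where
  "hf [] = 0" | "hf (c#w) = dl c + hf w"

fun abv :: "int \<Rightarrow> nat list \<Rightarrow> int \<Rightarrow> bool" where
  "abv h [] m = (m \<le> h)" | "abv h (c#w) m = (m \<le> h \<and> abv (h + dl c) w m)"

definition dy :: "nat list \<Rightarrow> bool" where
  "dy w \<longleftrightarrow> set w \<subseteq> {0,1} \<and> hf w = 0 \<and> abv 0 w 0"

lemma hf_append[simp]: "hf (a @ b) = hf a + hf b"
  by (induction a) auto

lemma hf_rep0[simp]: "hf (replicate k 0) = - int k"
  by (induction k) (auto simp: dl_def)

lemma hf_rep1[simp]: "hf (replicate k 1) = int k"
  by (induction k) (auto simp: dl_def)

lemma hf_rep1'[simp]: "hf (replicate k (Suc 0)) = int k"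
  using hf_rep1 by simp

lemma hf_count: "set w \<subseteq> {0,1} \<Longrightarrow> hf w = int (count_list w 1) - int (count_list w 0)"
  by (induction w) (auto simp: dl_def)

lemma abv_take: "abv h w m \<longleftrightarrow> (\<forall>k \<le> length w. m \<le> h + hf (take k w))"
proof (induction w arbitrary: h)
  case Nil then show ?case by simp
next
  case (Cons c w)
  show ?case
  proof
    assume A: "abv h (c # w) m"
    show "\<forall>k\<le>length (c # w). m \<le> h + hf (take k (c # w))"
    proof (intro allI impI)
      fix k assume "k \<le> length (c#w)"
      then show "m \<le> h + hf (take k (c # w))"
        using A Cons.IH[of "h + dl c"] by (cases k) (auto simp: algebra_simps)
    qed
  next
    assume A: "\<forall>k\<le>length (c # w). m \<le> h + hf (take k (c # w))"
    have "m \<le> h" using A[rule_format, of 0] by simp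
    moreover have "\<forall>k\<le>length w. m \<le> h + dl c + hf (take k w)"
    proof (intro allI impI)
      fix k assume "k \<le> length w"
      then show "m \<le> h + dl c + hf (take k w)" using A[rule_format, of "Suc k"] by (simp add: algebra_simps)
    qed
    ultimately show "abv h (c # w) m" using Cons.IH by simp
  qed
qed

lemma dyck_dy: "dyck w \<longleftrightarrow> dy w"
proof -
  have "dyck w \<longleftrightarrow> set w \<subseteq> {0,1} \<and> hf w = 0 \<and> (\<forall>k \<le> length w. 0 \<le> hf (take k w))"
  proof -
    { assume S: "set w \<subseteq> {0,1}"
      have St: "\<And>k. set (take k w) \<subseteq> {0,1}" using S by (meson order_trans set_take_subset)
      have "(count_list w 1 = count_list w 0) \<longleftrightarrow> hf w = 0" using hf_count[OF S] by simp
      moreover have "\<And>k. (count_list (take k w) 0 \<le> count_list (take k w) 1) \<longleftrightarrow> 0 \<le> hf (take k w)"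
        using hf_count[OF St] by simp
      ultimately have ?thesis unfolding dyck_def using S by simp }
    then show ?thesis unfolding dyck_def by blast
  qed
  then show ?thesis unfolding dy_def abv_take by simp
qed

lemma abv_ge: "abv h w m \<Longrightarrow> m \<le> h"
  by (cases w) auto

lemma abv_append: "abv h (a @ b) m \<longleftrightarrow> abv h a m \<and> abv (h + hf a) b m"
  by (induction a arbitrary: h) (auto simp: algebra_simps dest: abv_ge)

lemma abv_mono: "abv h w m \<Longrightarrow> m' \<le> m \<Longrightarrow> abv h w m'"
  by (induction w arbitrary: h) auto

lemma abv_shift: "abv (h + k) w (m + k) = abv h w m"
  unfolding abv_take by (simp add: algebra_simps)

lemma abv_rep0: "abv h (replicate k 0) m \<longleftrightarrow> m \<le> h - int k"
proof (induction k arbitrary: h)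
  case (Suc k)
  have "abv h (replicate (Suc k) 0) m \<longleftrightarrow> m \<le> h \<and> abv (h - 1) (replicate k 0) m"
    by (simp add: dl_def)
  also have "\<dots> \<longleftrightarrow> m \<le> h - int (Suc k)" by (simp only: Suc.IH) linarith
  finally show ?case .
qed simp

lemma abv_rep1: "abv h (replicate k 1) m \<longleftrightarrow> m \<le> h"
proof (induction k arbitrary: h)
  case (Suc k)
  have "abv h (replicate (Suc k) 1) m \<longleftrightarrow> m \<le> h \<and> abv (h + 1) (replicate k 1) m"
    by (simp add: dl_def)
  also have "\<dots> \<longleftrightarrow> m \<le> h" by (simp only: Suc.IH) linarith
  finally show ?case .
qed simp

lemma dy_hd: "dy (c # w) \<Longrightarrow> c = 1"
  unfolding dy_def by (auto simp: dl_def split: if_splits dest: abv_ge)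




lemma dy_last: "dy x \<Longrightarrow> x \<noteq> [] \<Longrightarrow> last x = 0"
proof -
  assume D: "dy x" and N: "x \<noteq> []"
  have x: "x = butlast x @ [last x]" using N by simp
  have "abv 0 x 0" "hf x = 0" "set x \<subseteq> {0,1}" using D unfolding dy_def by auto
  then have "abv 0 (butlast x @ [last x]) 0" "hf (butlast x @ [last x]) = 0" using x by auto
  then have "0 \<le> hf (butlast x)" "hf (butlast x) + dl (last x) = 0"
    by (auto simp: abv_append dest: abv_ge)
  then have "last x \<noteq> 1" by (auto simp: dl_def)
  moreover have "last x \<in> {0,1}" using \<open>set x \<subseteq> {0,1}\<close> N last_in_set by blast
  ultimately show ?thesis by auto
qed

lemma dy_split:
  assumes "dy x" "0 < j" "j < length x" "hf (take j x) = 0"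
  shows "dy (take j x)" "dy (drop j x)"
proof -
  have S: "set x \<subseteq> {0,1}" "hf x = 0" "abv 0 x 0" using assms(1) unfolding dy_def by auto
  have x: "x = take j x @ drop j x" by simp
  have A: "abv 0 (take j x) 0 \<and> abv (hf (take j x)) (drop j x) 0"
    using S(3) x abv_append[of 0 "take j x" "drop j x" 0] by simp
  have H: "hf (drop j x) = 0" using S(2) x assms(4) hf_append[of "take j x" "drop j x"] by simp
  show "dy (take j x)" unfolding dy_def using A assms(4) S(1) by (meson order_trans set_take_subset)
  show "dy (drop j x)" unfolding dy_def using A assms(4) S(1) H by (auto dest: in_set_dropD)
qed

lemma prim_dy: "primitive x \<Longrightarrow> dy x"
  unfolding primitive_def dyck_dy by simp

lemma prim_pos:
  assumes "primitive x" "0 < j" "j < length x"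
  shows "1 \<le> hf (take j x)"
proof (rule ccontr)
  assume "\<not> 1 \<le> hf (take j x)"
  moreover have "0 \<le> hf (take j x)" using prim_dy[OF assms(1)] assms unfolding dy_def abv_take by simp
  ultimately have z: "hf (take j x) = 0" by simp
  have D: "dy x" using prim_dy[OF assms(1)] .
  have "dy (take j x)" "dy (drop j x)" using dy_split[OF D assms(2,3) z] by auto
  moreover have "x = take j x @ drop j x" by simp
  ultimately have "take j x = [] \<or> drop j x = []" using assms(1) unfolding primitive_def dyck_dy by blast
  then show False using assms(2,3) by auto
qed

lemma prim_struct:
  assumes "primitive x" "x \<noteq> []"
  shows "\<exists>y. x = 1 # y @ [0] \<and> abv 0 y 0 \<and> hf y = 0"
proof -
  have D: "dy x" using prim_dy[OF assms(1)] .
  obtain c x1 where x: "x = c # x1" using assms(2) by (cases x) auto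
  have c: "c = 1" using dy_hd D x by simp
  have "hf x = 0" using D unfolding dy_def by simp
  then have "x1 \<noteq> []" using x c by (auto simp: dl_def)
  then obtain y e where x1: "x1 = y @ [e]" by (metis append_butlast_last_id)
  have "e = 0" using dy_last[OF D assms(2)] x x1 by simp
  then have xe: "x = 1 # y @ [0]" using x x1 c by simp
  have hy: "hf y = 0" using \<open>hf x = 0\<close> xe by (simp add: dl_def)
  have "abv 0 y 0" unfolding abv_take
  proof (intro allI impI)
    fix k assume k: "k \<le> length y"
    have "1 \<le> hf (take (Suc k) x)" using prim_pos[OF assms(1), of "Suc k"] k xe by simp
    moreover have "take (Suc k) x = 1 # take k y" using xe k by simp
    ultimately show "0 \<le> 0 + hf (take k y)" by (simp add: dl_def)
  qed
  then show ?thesis using xe hy by blast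
qed

lemma pyr_dy: "dy (replicate j 1 @ replicate j 0)"
proof -
  have "set (replicate j 1 @ replicate j (0::nat)) \<subseteq> {0,1}" by auto
  moreover have "hf (replicate j 1 @ replicate j 0) = 0" by (simp only: hf_append hf_rep0 hf_rep1)
  moreover have "abv 0 (replicate j 1 @ replicate j 0) 0"
    by (simp only: abv_append abv_rep0 abv_rep1 hf_rep1) simp
  ultimately show ?thesis unfolding dy_def by blast
qed

lemma pyr_prim: "0 < q \<Longrightarrow> primitive (replicate q 1 @ replicate q 0)" (is "_ \<Longrightarrow> primitive ?x")
  unfolding primitive_def
proof (intro conjI allI impI)
  assume q: "0 < q"
  show "dyck ?x" using pyr_dy dyck_dy by simp
  fix a b assume A: "?x = a @ b \<and> dyck a \<and> dyck b"
  show "a = [] \<or> b = []"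
  proof (rule ccontr)
    assume N: "\<not> (a = [] \<or> b = [])"
    define j where "j = length a"
    have L: "length ?x = length a + length b" using A by (metis length_append)
    have "0 < length b" "0 < length a" using N by auto
    moreover have "q + q = length a + length b" using L by simp
    ultimately have j: "0 < j" "j < 2 * q" unfolding j_def by linarith+
    have ta: "take j ?x = a" using A j_def by simp
    have "hf a = 0" using A dyck_dy dy_def by simp
    moreover have "0 < hf (take j ?x)"
    proof (cases "j \<le> q")
      case True
      then have "take j ?x = replicate j 1" by (simp add: take_append)
      then show ?thesis using j by simp
    next
      case False
      then have "take j ?x = replicate q 1 @ replicate (j - q) 0" using j by (simp add: take_append min_def)
      then show ?thesis using j False by simp
    qed
    ultimately show False using ta by (metis less_irrefl)
  qed
qed

lemma cover_dec:
  assumes "dexter_cover d d'"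
  shows "\<exists>P \<beta> x s. d = P @ replicate \<beta> 0 @ x @ s \<and> d' = P @ x @ replicate \<beta> 0 @ s \<and> 0 < \<beta>
     \<and> primitive x \<and> (s = [] \<or> hd s = 1) \<and> dy d"
proof -
  obtain p m x s \<alpha> \<beta> where o: "d = p @ [1] @ replicate m 0 @ x @ s" "m > 0" "primitive x"
        "(s = [] \<or> hd s = 1)" "\<alpha> + \<beta> = m" "\<beta> > 0"
        "d' = p @ [1] @ replicate \<alpha> 0 @ x @ replicate \<beta> 0 @ s" "dyck d"
    using assms unfolding dexter_cover_def by blast
  have "replicate m 0 = replicate \<alpha> 0 @ replicate \<beta> (0::nat)" unfolding o(5)[symmetric] by (rule replicate_add)
  then have "d = (p @ [1] @ replicate \<alpha> 0) @ replicate \<beta> 0 @ x @ s" using o(1) by simp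
  moreover have "d' = (p @ [1] @ replicate \<alpha> 0) @ x @ replicate \<beta> 0 @ s" using o(7) by simp
  ultimately show ?thesis using o dyck_dy by blast
qed




fun lf :: "bool \<Rightarrow> nat list \<Rightarrow> bool" where
  "lf pu [] = pu" | "lf pu (c#w) = lf (c = 1) w"

fun nvh :: "int \<Rightarrow> bool \<Rightarrow> nat list \<Rightarrow> int option" where
  "nvh h pu [] = None"
| "nvh h pu (c#w) = (if c = 1 then (if pu then nvh (h+1) True w else Some h) else nvh (h-1) False w)"

fun sv :: "int \<Rightarrow> bool \<Rightarrow> nat list \<Rightarrow> (bool \<times> int option) list" where
  "sv h pu [] = []"
| "sv h pu (c#w) = (if c = 1 then (pu, nvh (h+1) True w) # sv (h+1) True w else sv (h-1) False w)"

definition fx :: "int option \<Rightarrow> bool \<times> int option \<Rightarrow> bool \<times> int option" where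
  "fx B e = (fst e, if snd e = None then B else snd e)"

definition nz :: "int option \<Rightarrow> int" where
  "nz oo = (case oo of None \<Rightarrow> 0 | Some v \<Rightarrow> v)"

definition ent_le :: "bool \<times> int option \<Rightarrow> bool \<times> int option \<Rightarrow> bool" where
  "ent_le e e' \<longleftrightarrow> (fst e \<longrightarrow> fst e') \<and> nz (snd e) \<le> nz (snd e')"

lemma lf_last: "w \<noteq> [] \<Longrightarrow> lf pu w = (last w = 1)"
proof (induction w arbitrary: pu)
  case (Cons c w)
  then show ?case by (cases w) auto
qed simp

lemma nvh_append: "nvh h pu (a @ b) = (case nvh h pu a of None \<Rightarrow> nvh (h + hf a) (lf pu a) b | Some v \<Rightarrow> Some v)"
proof (induction a arbitrary: h pu)
  case (Cons c a)
  show ?case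
  proof (cases "c = 1")
    case True
    then have ca: "c # a = 1 # a" by simp
    have e: "h + hf (1 # a) = (h + 1) + hf a" by (simp add: dl_def)
    show ?thesis using Cons.IH[of "h+1" True] unfolding ca append_Cons e
      by (cases pu) (simp_all split: option.splits)
  next
    case False
    have e: "h + hf (c # a) = (h - 1) + hf a" using False by (simp add: dl_def)
    show ?thesis using Cons.IH[of "h-1" False] False unfolding e by (simp split: option.splits)
  qed
qed simp

lemma sv_append: "sv h pu (a @ b) = map (fx (nvh (h + hf a) (lf pu a) b)) (sv h pu a) @ sv (h + hf a) (lf pu a) b"
proof (induction a arbitrary: h pu)
  case (Cons c a)
  show ?case
  proof (cases "c = 1")
    case True
    then have ca: "c # a = 1 # a" by simp
    have e: "h + hf (1 # a) = (h + 1) + hf a" by (simp add: dl_def)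
    show ?thesis using Cons.IH[of "h+1" True] unfolding ca append_Cons e
      by (simp add: nvh_append fx_def split: option.splits)
  next
    case False
    have e: "h + hf (c # a) = (h - 1) + hf a" using False by (simp add: dl_def)
    show ?thesis using Cons.IH[of "h-1" False] False unfolding e by simp
  qed
qed simp

lemma nvh_shift: "nvh (h + k) pu w = map_option (\<lambda>v. v + k) (nvh h pu w)"
proof (induction w arbitrary: h pu)
  case (Cons c w)
  have a: "h + k + 1 = (h + 1) + k" "h + k - 1 = (h - 1) + k" by simp_all
  show ?case using Cons.IH[of "h+1"] Cons.IH[of "h-1"] by (simp only: nvh.simps a) simp
qed simp

lemma sv_shift: "sv (h + k) pu w = map (\<lambda>e. (fst e, map_option (\<lambda>v. v + k) (snd e))) (sv h pu w)"
proof (induction w arbitrary: h pu)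
  case (Cons c w)
  have a: "h + k + 1 = (h + 1) + k" "h + k - 1 = (h - 1) + k" by simp_all
  show ?case using Cons.IH[of "h+1"] Cons.IH[of "h-1"] nvh_shift[of "h+1" k]
    by (simp only: sv.simps a) simp
qed simp

lemma sv_pu: "list_all2 (\<lambda>e e'. (fst e \<longrightarrow> fst e') \<and> snd e = snd e') (sv h pu w) (sv h pu' w)"
  if "pu \<longrightarrow> pu'"
proof (cases w)
  case (Cons c w')
  have r: "list_all2 (\<lambda>e e'. (fst e \<longrightarrow> fst e') \<and> snd e = snd e') L L" for L :: "(bool \<times> int option) list"
    by (induction L) auto
  show ?thesis using that r by (simp add: Cons)
qed simp

lemma nvh_rep0': "nvh h pu (replicate (Suc k) 0 @ w) = nvh (h - int (Suc k)) False w"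
proof (induction k arbitrary: h pu)
  case (Suc k)
  have "nvh h pu (replicate (Suc (Suc k)) 0 @ w) = nvh (h - 1) False (replicate (Suc k) 0 @ w)" by simp
  also have "\<dots> = nvh (h - 1 - int (Suc k)) False w" by (rule Suc.IH)
  also have "h - 1 - int (Suc k) = h - int (Suc (Suc k))" by simp
  finally show ?case .
qed simp

lemma nvh_rep0: "0 < k \<Longrightarrow> nvh h pu (replicate k 0 @ w) = nvh (h - int k) False w"
  using nvh_rep0'[of h pu "k - 1" w] by simp

lemma sv_rep0': "sv h pu (replicate (Suc k) 0 @ w) = sv (h - int (Suc k)) False w"
proof (induction k arbitrary: h pu)
  case (Suc k)
  have "sv h pu (replicate (Suc (Suc k)) 0 @ w) = sv (h - 1) False (replicate (Suc k) 0 @ w)" by simp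
  also have "\<dots> = sv (h - 1 - int (Suc k)) False w" by (rule Suc.IH)
  also have "h - 1 - int (Suc k) = h - int (Suc (Suc k))" by simp
  finally show ?case .
qed simp

lemma sv_rep0: "0 < k \<Longrightarrow> sv h pu (replicate k 0 @ w) = sv (h - int k) False w"
  using sv_rep0'[of h pu "k - 1" w] by simp

lemma nvh_abv: "abv h w m \<Longrightarrow> nvh h pu w = Some v \<Longrightarrow> m \<le> v"
  by (induction w arbitrary: h pu) (auto simp: dl_def split: if_splits)

lemma hf_rep0_app: "hf (replicate k 0 @ w) = hf w - int k" by simp

lemma lf_rep0': "lf pu (replicate (Suc k) 0 @ w) = lf False w"
  by (induction k arbitrary: pu) auto

lemma lf_rep0: "0 < k \<Longrightarrow> lf pu (replicate k 0 @ w) = lf False w"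
  using lf_rep0'[of pu "k - 1" w] by simp

lemma fx_mono: "nz B \<le> nz B' \<Longrightarrow> list_all2 ent_le (map (fx B) L) (map (fx B') L)"
  by (induction L) (auto simp: fx_def ent_le_def)

lemma ent_le_refl: "list_all2 ent_le L L"
  by (induction L) (auto simp: ent_le_def)

lemma G3_core:
  assumes D: "dy (P @ replicate \<beta> 0 @ x @ s)" and b: "0 < \<beta>" and px: "primitive x"
    and s: "s = [] \<or> hd s = 1"
  shows "list_all2 ent_le (sv 0 False (P @ replicate \<beta> 0 @ x @ s)) (sv 0 False (P @ x @ replicate \<beta> 0 @ s))"
proof (cases "x = []")
  case True then show ?thesis using ent_le_refl by simp
next
  case False
  define h0 where "h0 = hf P"
  define f0 where "f0 = lf False P"
  define hx where "hx = h0 - int \<beta>"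
  define Y where "Y = replicate \<beta> 0 @ x @ s"
  define Y' where "Y' = x @ replicate \<beta> 0 @ s"
  have dx: "dy x" using prim_dy[OF px] .
  obtain x1 where x1: "x = 1 # x1" using False dy_hd[of _ ] dx by (cases x) auto
  have hfx: "hf x = 0" using dx dy_def by simp
  have abx: "abv 0 x 0" using dx dy_def by simp
  then have abx0: "abv h0 x h0" using abv_shift[of 0 h0 x 0] by simp
  have lfx: "lf pu x = False" for pu using lf_last[OF False] dy_last[OF dx False] by simp
  have hd0: "hf (P @ replicate \<beta> 0 @ x @ s) = 0" using D dy_def by simp
  then have hxs: "hx + hf s = 0" unfolding hx_def h0_def using hfx by simp
  have ad: "abv 0 (P @ replicate \<beta> 0 @ x @ s) 0" using D dy_def by simp
  then have "abv hx (x @ s) 0" unfolding hx_def h0_def by (simp add: abv_append)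
  then have hx0: "0 \<le> hx" using abv_ge by blast
  have svd: "sv 0 False (P @ Y) = map (fx (nvh h0 f0 Y)) (sv 0 False P) @ sv h0 f0 Y"
    using sv_append[of 0 False P Y] unfolding h0_def f0_def by simp
  have svd': "sv 0 False (P @ Y') = map (fx (nvh h0 f0 Y')) (sv 0 False P) @ sv h0 f0 Y'"
    using sv_append[of 0 False P Y'] unfolding h0_def f0_def by simp
  have B: "nvh h0 f0 Y = Some hx" unfolding Y_def hx_def using nvh_rep0[OF b] x1 by simp
  have a: "nz (nvh h0 f0 Y) \<le> nz (nvh h0 f0 Y')"
  proof (cases "nvh h0 f0 x")
    case (Some v)
    then have "nvh h0 f0 Y' = Some v" unfolding Y'_def by (simp add: nvh_append)
    moreover have "h0 \<le> v" using nvh_abv[OF abx0 Some] .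
    ultimately show ?thesis using B b unfolding nz_def hx_def by simp
  next
    case None
    then have "nvh h0 f0 Y' = nvh h0 False (replicate \<beta> 0 @ s)" unfolding Y'_def
      by (simp add: nvh_append hfx lfx)
    also have "\<dots> = nvh hx False s" unfolding hx_def using nvh_rep0[OF b] by simp
    finally have e: "nvh h0 f0 Y' = nvh hx False s" .
    show ?thesis
    proof (cases s)
      case Nil then show ?thesis using e B hxs unfolding nz_def by simp
    next
      case (Cons c s') then have "c = 1" using s by simp
      then show ?thesis using e B Cons unfolding nz_def by simp
    qed
  qed
  have bb: "list_all2 ent_le (sv h0 f0 Y) (sv h0 f0 Y')"
  proof -
    define Bs where "Bs = nvh hx False s"
    have e1: "sv h0 f0 Y = map (fx Bs) (sv hx False x) @ sv hx False s"
      unfolding Y_def hx_def Bs_def using sv_rep0[OF b] sv_append[of _ False x s] hfx lfx by simp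
    have e2: "sv h0 f0 Y' = map (fx Bs) (sv h0 f0 x) @ sv hx False s"
    proof -
      have "sv h0 f0 Y' = map (fx (nvh h0 False (replicate \<beta> 0 @ s))) (sv h0 f0 x) @ sv h0 False (replicate \<beta> 0 @ s)"
        unfolding Y'_def using sv_append[of h0 f0 x] hfx lfx by simp
      then show ?thesis unfolding Bs_def hx_def using sv_rep0[OF b] nvh_rep0[OF b] by simp
    qed
    have sh: "sv h0 f0 x = map (\<lambda>e. (fst e, map_option (\<lambda>v. v + int \<beta>) (snd e))) (sv hx f0 x)"
      using sv_shift[of hx "int \<beta>" f0 x] unfolding hx_def by simp
    have pu: "list_all2 (\<lambda>e e'. (fst e \<longrightarrow> fst e') \<and> snd e = snd e') (sv hx False x) (sv hx f0 x)"
      using sv_pu by simp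
    have X: "list_all2 ent_le (map (fx Bs) (sv hx False x)) (map (fx Bs) (sv h0 f0 x))"
      unfolding sh list.rel_map using pu
      by (rule list_all2_mono) (auto simp: ent_le_def fx_def nz_def split: option.splits)
    show ?thesis unfolding e1 e2 using X ent_le_refl by (rule list_all2_appendI)
  qed
  show ?thesis
    using list_all2_appendI[OF fx_mono[OF a] bb] svd svd' unfolding Y_def Y'_def by simp
qed

lemma G3:
  assumes "dexter_cover d d'"
  shows "list_all2 ent_le (sv 0 False d) (sv 0 False d')"
  using cover_dec[OF assms] G3_core by blast




fun rfl :: "int \<Rightarrow> bool \<Rightarrow> nat list \<Rightarrow> bool" where
  "rfl h r [] = r"
| "rfl h r (c#w) = (if c = 1 then rfl (h+1) r w else rfl (h-1) (r \<or> h - 1 \<le> 0) w)"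

fun bd :: "int \<Rightarrow> bool \<Rightarrow> bool \<Rightarrow> nat list \<Rightarrow> bool" where
  "bd h pu r [] = False"
| "bd h pu r (c#w) = (if c = 1 then ((\<not> pu \<and> (2 \<le> h \<or> (1 \<le> h \<and> r))) \<or> bd (h+1) True r w)
                      else bd (h-1) False (r \<or> h - 1 \<le> 0) w)"

lemma bd_append: "bd h pu r (a @ b) = (bd h pu r a \<or> bd (h + hf a) (lf pu a) (rfl h r a) b)"
proof (induction a arbitrary: h pu r)
  case (Cons c a)
  show ?case
  proof (cases "c = 1")
    case True
    then have ca: "c # a = 1 # a" by simp
    have e: "h + hf (1 # a) = (h + 1) + hf a" by (simp add: dl_def)
    show ?thesis using Cons.IH[of "h+1" True r] unfolding ca append_Cons e by simp
  next
    case False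
    have e: "h + hf (c # a) = (h - 1) + hf a" using False by (simp add: dl_def)
    show ?thesis using Cons.IH[of "h-1" False] False unfolding e by simp
  qed
qed simp

lemma rfl_True: "rfl h True w"
  by (induction w arbitrary: h) auto

lemma rfl_abv: "abv h w 1 \<Longrightarrow> rfl h r w = r"
proof (induction w arbitrary: h r)
  case (Cons c w)
  show ?case
  proof (cases "c = 1")
    case True then show ?thesis using Cons by (simp add: dl_def)
  next
    case False
    then have a: "abv (h - 1) w 1" using Cons.prems by (simp add: dl_def)
    then have "1 \<le> h - 1" using abv_ge by blast
    then show ?thesis using Cons.IH[OF a] False by simp
  qed
qed simp

lemma bd_rep0': "bd h pu r (replicate (Suc k) 0 @ w) = bd (h - int (Suc k)) False (r \<or> h - int (Suc k) \<le> 0) w"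
proof (induction k arbitrary: h pu r)
  case (Suc k)
  have "bd h pu r (replicate (Suc (Suc k)) 0 @ w) = bd (h - 1) False (r \<or> h - 1 \<le> 0) (replicate (Suc k) 0 @ w)" by simp
  also have "\<dots> = bd (h - 1 - int (Suc k)) False ((r \<or> h - 1 \<le> 0) \<or> h - 1 - int (Suc k) \<le> 0) w" by (rule Suc.IH)
  also have "h - 1 - int (Suc k) = h - int (Suc (Suc k))" by simp
  also have "((r \<or> h - 1 \<le> 0) \<or> h - int (Suc (Suc k)) \<le> 0) = (r \<or> h - int (Suc (Suc k)) \<le> 0)" by auto
  finally show ?case .
qed simp

lemma bd_rep0: "0 < k \<Longrightarrow> bd h pu r (replicate k 0 @ w) = bd (h - int k) False (r \<or> h - int k \<le> 0) w"
  using bd_rep0'[of h pu r "k - 1" w] by simp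

lemma bd_nvh: "bd h pu r w \<Longrightarrow> nvh h pu w \<noteq> None"
  by (induction w arbitrary: h pu r) (auto split: if_splits)

lemma nvh_bd: "nvh h pu w = Some v \<Longrightarrow> 2 \<le> v \<Longrightarrow> bd h pu r w"
  by (induction w arbitrary: h pu r) (auto split: if_splits)

lemma G2_core:
  assumes D: "dy (P @ replicate \<beta> 0 @ x @ s)" and b: "0 < \<beta>" and px: "primitive x"
    and s: "s = [] \<or> hd s = 1"
    and B: "bd 0 False False (P @ replicate \<beta> 0 @ x @ s)"
  shows "bd 0 False False (P @ x @ replicate \<beta> 0 @ s)"
proof (cases "x = []")
  case True then show ?thesis using B by simp
next
  case False
  define h0 where "h0 = hf P"
  define f0 where "f0 = lf False P"
  define r0 where "r0 = rfl 0 False P"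
  define hx where "hx = h0 - int \<beta>"
  define r1 where "r1 = (r0 \<or> hx \<le> 0)"
  obtain y where y: "x = 1 # y @ [0]" "abv 0 y 0" "hf y = 0" using prim_struct[OF px False] by blast
  have dx: "dy x" using prim_dy[OF px] .
  have hfx: "hf x = 0" using dx dy_def by simp
  have abx: "abv 0 x 0" using dx dy_def by simp
  have lfx: "lf pu x = False" for pu using lf_last[OF False] dy_last[OF dx False] by simp
  have hd0: "hf (P @ replicate \<beta> 0 @ x @ s) = 0" using D dy_def by simp
  then have hxs: "hx + hf s = 0" unfolding hx_def h0_def using hfx by simp
  have ad: "abv 0 (P @ replicate \<beta> 0 @ x @ s) 0" using D dy_def by simp
  then have "abv hx (x @ s) 0" unfolding hx_def h0_def by (simp add: abv_append)
  then have hx0: "0 \<le> hx" using abv_ge by blast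
  have rx: "rfl hx r1 x = r1"
  proof (cases "1 \<le> hx")
    case True
    have "abv hx x hx" using abv_shift[of 0 hx x 0] abx by simp
    then have "abv hx x 1" using abv_mono True by blast
    then show ?thesis by (rule rfl_abv)
  next
    case False
    then have "r1" unfolding r1_def by simp
    then show ?thesis using rfl_True by simp
  qed
  have rx0: "rfl h0 r0 x = r0"
  proof -
    have "abv h0 x h0" using abv_shift[of 0 h0 x 0] abx by simp
    moreover have "1 \<le> h0" using hx0 b unfolding hx_def by simp
    ultimately have "abv h0 x 1" using abv_mono by blast
    then show ?thesis by (rule rfl_abv)
  qed
  have e1: "bd 0 False False (P @ replicate \<beta> 0 @ x @ s) = (bd 0 False False P \<or> bd hx False r1 x \<or> bd hx False r1 s)"
  proof -
    have "bd 0 False False (P @ replicate \<beta> 0 @ x @ s) = (bd 0 False False P \<or> bd h0 f0 r0 (replicate \<beta> 0 @ x @ s))"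
      using bd_append[of 0 False False P] unfolding h0_def f0_def r0_def by simp
    also have "bd h0 f0 r0 (replicate \<beta> 0 @ x @ s) = bd hx False r1 (x @ s)"
      unfolding hx_def r1_def using bd_rep0[OF b] by simp
    also have "\<dots> = (bd hx False r1 x \<or> bd hx False r1 s)"
      using bd_append[of hx False r1 x s] hfx lfx rx by simp
    finally show ?thesis by simp
  qed
  have e2: "bd 0 False False (P @ x @ replicate \<beta> 0 @ s) = (bd 0 False False P \<or> bd h0 f0 r0 x \<or> bd hx False r1 s)"
  proof -
    have "bd 0 False False (P @ x @ replicate \<beta> 0 @ s) = (bd 0 False False P \<or> bd h0 f0 r0 (x @ replicate \<beta> 0 @ s))"
      using bd_append[of 0 False False P] unfolding h0_def f0_def r0_def by simp
    also have "bd h0 f0 r0 (x @ replicate \<beta> 0 @ s) = (bd h0 f0 r0 x \<or> bd h0 False r0 (replicate \<beta> 0 @ s))"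
      using bd_append[of h0 f0 r0 x] hfx lfx rx0 by simp
    also have "bd h0 False r0 (replicate \<beta> 0 @ s) = bd hx False r1 s"
      unfolding hx_def r1_def using bd_rep0[OF b] by simp
    finally show ?thesis by simp
  qed
  have key: "bd hx False r1 x \<Longrightarrow> bd h0 f0 r0 x \<or> bd hx False r1 s"
  proof -
    assume bx: "bd hx False r1 x"
    have "(2 \<le> hx \<or> (1 \<le> hx \<and> r1)) \<or> bd (hx+1) True r1 (y @ [0])" using bx y(1) by simp
    then show ?thesis
    proof
      assume A: "2 \<le> hx \<or> (1 \<le> hx \<and> r1)"
      then have "s \<noteq> []" using hxs by auto
      then obtain s' where "s = 1 # s'" using s by (cases s) auto
      then show ?thesis using A by simp
    next
      assume "bd (hx+1) True r1 (y @ [0])"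
      then have "bd (hx+1) True r1 y" using bd_append[of "hx+1" True r1 y "[0]"] by simp
      then obtain v where v: "nvh (hx+1) True y = Some v" using bd_nvh by blast
      have "abv (hx+1) y (hx+1)" using abv_shift[of 0 "hx+1" y 0] y(2) by simp
      then have "hx + 1 \<le> v" using nvh_abv v by blast
      have "nvh (h0+1) True y = Some (v + int \<beta>)"
        using nvh_shift[of "hx+1" "int \<beta>" True y] v unfolding hx_def by (simp add: algebra_simps)
      moreover have "2 \<le> v + int \<beta>" using \<open>hx + 1 \<le> v\<close> hx0 b by simp
      ultimately have "bd (h0+1) True r0 y" using nvh_bd by blast
      then have "bd (h0+1) True r0 (y @ [0])" using bd_append by simp
      then have "bd h0 f0 r0 x" using y(1) by simp
      then show ?thesis by simp
    qed
  qed
  show ?thesis using B e1 e2 key by blast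
qed

lemma G2:
  assumes "dexter_cover d d'" "bd 0 False False d"
  shows "bd 0 False False d'"
  using cover_dec[OF assms(1)] G2_core assms(2) by blast




fun ew :: "nat \<Rightarrow> nat \<Rightarrow> nat list \<Rightarrow> nat list" where
  "ew h v [] = []"
| "ew h v (c#cs) = (if c = 2 then 1 # ew (h+1) v cs else replicate (h - v) 0 @ 1 # ew (v+1) c cs)"

fun st :: "nat \<Rightarrow> nat \<Rightarrow> nat list \<Rightarrow> nat \<times> nat" where
  "st h v [] = (h, v)"
| "st h v (c#cs) = (if c = 2 then st (h+1) v cs else st (v+1) c cs)"

definition ewf :: "nat \<Rightarrow> nat \<Rightarrow> nat list \<Rightarrow> nat list" where
  "ewf h v cs = ew h v cs @ replicate (fst (st h v cs)) 0"

lemma ewf_Nil[simp]: "ewf h v [] = replicate h 0"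
  by (simp add: ewf_def)

lemma ewf_2[simp]: "ewf h v (2 # cs) = 1 # ewf (h+1) v cs"
  by (simp add: ewf_def)

lemma ewf_n2: "c \<noteq> 2 \<Longrightarrow> ewf h v (c # cs) = replicate (h - v) 0 @ 1 # ewf (v+1) c cs"
  by (simp add: ewf_def)

lemma ew_append: "ew h v (a @ b) = ew h v a @ ew (fst (st h v a)) (snd (st h v a)) b"
  by (induction a arbitrary: h v) auto

lemma st_append: "st h v (a @ b) = st (fst (st h v a)) (snd (st h v a)) b"
  by (induction a arbitrary: h v) auto

lemma ewf_append: "ewf h v (a @ b) = ew h v a @ ewf (fst (st h v a)) (snd (st h v a)) b"
  unfolding ewf_def by (simp add: ew_append st_append)

lemma ew_rep2: "ew h v (replicate j 2 @ cs) = replicate j 1 @ ew (h + j) v cs"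
  by (induction j arbitrary: h) auto

lemma st_rep2: "st h v (replicate j 2 @ cs) = st (h + j) v cs"
  by (induction j arbitrary: h) auto

lemma ewf_rep2: "ewf h v (replicate j 2 @ cs) = replicate j 1 @ ewf (h + j) v cs"
  unfolding ewf_def by (simp add: ew_rep2 st_rep2)

lemma ew_nonempty: "cs \<noteq> [] \<Longrightarrow> \<exists>p. ew h v cs = p @ [1]"
proof (induction cs arbitrary: h v)
  case (Cons c cs)
  show ?case
  proof (cases "cs = []")
    case True then show ?thesis by auto
  next
    case False
    have "\<exists>p. ew (h+1) v cs = p @ [1]" "\<exists>p. ew (v+1) c cs = p @ [1]" using Cons.IH[OF False] by auto
    then show ?thesis by (cases "c = 2") auto
  qed
qed simp

lemma ewf_props:
  assumes "v \<le> h" "set cs \<subseteq> {0,1,2}"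
  shows "set (ewf h v cs) \<subseteq> {0,1} \<and> int h + hf (ewf h v cs) = 0 \<and> abv (int h) (ewf h v cs) 0
         \<and> count_list (ewf h v cs) 1 = length cs"
  using assms
proof (induction cs arbitrary: h v)
  case Nil
  then show ?case by (auto simp: abv_rep0 set_replicate_conv_if)
next
  case (Cons c cs)
  show ?case
  proof (cases "c = 2")
    case True
    have "v \<le> h + 1" using Cons.prems by simp
    then have IH: "set (ewf (h+1) v cs) \<subseteq> {0,1} \<and> int (h+1) + hf (ewf (h+1) v cs) = 0 \<and> abv (int (h+1)) (ewf (h+1) v cs) 0
         \<and> count_list (ewf (h+1) v cs) 1 = length cs" using Cons.IH[of v "h+1"] Cons.prems by simp
    then show ?thesis using True by (simp add: dl_def algebra_simps)
  next
    case False
    then have c1: "c \<le> 1" using Cons.prems by auto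
    then have "c \<le> v + 1" by simp
    then have IH: "set (ewf (v+1) c cs) \<subseteq> {0,1} \<and> int (v+1) + hf (ewf (v+1) c cs) = 0 \<and> abv (int (v+1)) (ewf (v+1) c cs) 0
         \<and> count_list (ewf (v+1) c cs) 1 = length cs" using Cons.IH[of c "v+1"] Cons.prems by simp
    have e: "ewf h v (c # cs) = replicate (h - v) 0 @ 1 # ewf (v+1) c cs" using ewf_n2[OF False] .
    have hv: "int (h - v) = int h - int v" using Cons.prems by simp
    show ?thesis unfolding e using IH hv by (auto simp: abv_append abv_rep0 dl_def algebra_simps)
  qed
qed

lemma ewf_dy: "set cs \<subseteq> {0,1,2} \<Longrightarrow> dy (ewf 0 0 cs)"
  using ewf_props[of 0 0 cs] unfolding dy_def by simp

lemma dy_length: "dy w \<Longrightarrow> length w = 2 * count_list w 1"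
proof -
  assume d: "dy w"
  then have S: "set w \<subseteq> {0,1}" and "hf w = 0" unfolding dy_def by auto
  then have c: "count_list w 1 = count_list w 0" using hf_count[OF S] by simp
  have "length w = count_list w 0 + count_list w 1" using S
    by (induction w) auto
  then show ?thesis using c by simp
qed




definition letter :: "bool \<times> int option \<Rightarrow> nat" where
  "letter e = (if fst e then 2 else nat (nz (snd e)))"

definition dec :: "nat list \<Rightarrow> nat list" where
  "dec d = map letter (sv 0 False d)"

lemma word_cases:
  assumes "set w \<subseteq> {0,1}"
  shows "w = [] \<or> (\<exists>w'. w = 1 # w') \<or> (\<exists>k w'. 0 < k \<and> w = replicate k 0 @ 1 # w') \<or> (\<exists>k. 0 < k \<and> w = replicate k 0)"
  using assms
proof (induction w)
  case (Cons c w)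
  show ?case
  proof (cases "c = 1")
    case True then show ?thesis by auto
  next
    case False
    then have c0: "c = 0" using Cons.prems by auto
    have "w = [] \<or> (\<exists>w'. w = 1 # w') \<or> (\<exists>k w'. 0 < k \<and> w = replicate k 0 @ 1 # w') \<or> (\<exists>k. 0 < k \<and> w = replicate k 0)"
      using Cons by simp
    then show ?thesis
    proof (elim disjE exE conjE)
      assume "w = []" then show ?thesis using c0 by (intro disjI2) (rule exI[of _ 1], simp)
    next
      fix w' assume "w = 1 # w'" then show ?thesis using c0
        by (intro disjI2 disjI1) (rule exI[of _ 1], rule exI[of _ w'], simp)
    next
      fix k w' assume "0 < k" "w = replicate k 0 @ 1 # w'" then show ?thesis using c0
        by (intro disjI2 disjI1) (rule exI[of _ "Suc k"], rule exI[of _ w'], simp)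
    next
      fix k assume "0 < k" "w = replicate k 0" then show ?thesis using c0
        by (intro disjI2) (rule exI[of _ "Suc k"], simp)
    qed
  qed
qed simp

lemma decode_gen:
  assumes "set w \<subseteq> {0,1}" "abv h w 0" "h + hf w = 0"
    "\<forall>e \<in> set (sv h True w). nz (snd e) \<le> 1" "nz (nvh h True w) \<le> 1"
  shows "ewf (nat h) (nat (nz (nvh h True w))) (map letter (sv h True w)) = w"
  using assms
proof (induction "length w" arbitrary: w h rule: less_induct)
  case less
  have h0: "0 \<le> h" using less.prems(2) abv_ge by blast
  from word_cases[OF less.prems(1)] show ?case
  proof (elim disjE exE conjE)
    assume "w = []" then show ?thesis using less.prems by simp
  next
    fix w' assume w: "w = 1 # w'"
    have IH: "ewf (nat (h+1)) (nat (nz (nvh (h+1) True w'))) (map letter (sv (h+1) True w')) = w'"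
      using less.hyps[of w' "h+1"] less.prems w by (auto simp: dl_def algebra_simps)
    have "nat (h+1) = nat h + 1" using h0 by simp
    then show ?thesis using IH w by (simp add: letter_def)
  next
    fix k w' assume k: "0 < k" and w: "w = replicate k 0 @ 1 # w'"
    have sv: "sv h True w = (False, nvh (h - int k + 1) True w') # sv (h - int k + 1) True w'"
      using sv_rep0[OF k] w by simp
    have nv: "nvh h True w = Some (h - int k)" using nvh_rep0[OF k] w by simp
    have ab: "abv (h - int k) (1 # w') 0" using less.prems(2) w by (simp add: abv_append abv_rep0)
    then have hk: "0 \<le> h - int k" using abv_ge by blast
    define c where "c = nat (nz (nvh (h - int k + 1) True w'))"
    have c1: "c \<le> 1" using less.prems(4) sv unfolding c_def by auto
    then have c2: "c \<noteq> 2" by simp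
    have IH: "ewf (nat (h - int k + 1)) c (map letter (sv (h - int k + 1) True w')) = w'"
      unfolding c_def
    proof (rule less.hyps)
      show "length w' < length w" using w by simp
      show "set w' \<subseteq> {0,1}" using less.prems(1) w by simp
      show "abv (h - int k + 1) w' 0" using ab by (simp add: dl_def)
      show "h - int k + 1 + hf w' = 0" using less.prems(3) w by (simp add: dl_def algebra_simps)
      show "\<forall>e\<in>set (sv (h - int k + 1) True w'). nz (snd e) \<le> 1" using less.prems(4) sv by simp
      show "nz (nvh (h - int k + 1) True w') \<le> 1" using less.prems(4) sv by simp
    qed
    have l: "map letter (sv h True w) = c # map letter (sv (h - int k + 1) True w')"
      using sv unfolding c_def by (simp add: letter_def)
    have e1: "nat h - nat (nz (nvh h True w)) = k" using nv hk h0 unfolding nz_def by simp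
    have e2: "nat (nz (nvh h True w)) + 1 = nat (h - int k + 1)" using nv hk unfolding nz_def by simp
    show ?thesis unfolding l ewf_n2[OF c2] e1 e2 IH using w by simp
  next
    fix k assume k: "0 < k" and w: "w = replicate k 0"
    have "sv h True w = []" using sv_rep0[OF k, of h True "[]"] w by simp
    moreover have "nat h = k" using less.prems(3) w h0 by simp
    ultimately show ?thesis using w by simp
  qed
qed

lemma decode:
  assumes "dy d" "\<forall>e \<in> set (sv 0 False d). nz (snd e) \<le> 1"
  shows "ewf 0 0 (dec d) = d"
proof (cases d)
  case Nil then show ?thesis by (simp add: dec_def)
next
  case (Cons c0 w)
  then have d: "d = 1 # w" using assms(1) dy_hd by simp
  have sv: "sv 0 False d = (False, nvh 1 True w) # sv 1 True w" using d by simp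
  define c where "c = nat (nz (nvh 1 True w))"
  have c1: "c \<le> 1" using assms(2) sv unfolding c_def by auto
  then have c2: "c \<noteq> 2" by simp
  have D: "set w \<subseteq> {0,1}" "abv 1 w 0" "1 + hf w = 0" using assms(1) d unfolding dy_def by (auto simp: dl_def)
  have IH: "ewf (nat 1) c (map letter (sv 1 True w)) = w"
    unfolding c_def by (rule decode_gen) (use D assms(2) sv in auto)
  have "dec d = c # map letter (sv 1 True w)" unfolding dec_def sv c_def by (simp add: letter_def)
  then show ?thesis using IH ewf_n2[OF c2, of 0 0] d by simp
qed




fun no01 :: "nat list \<Rightarrow> bool" where
  "no01 [] = True" | "no01 (c # cs) = ((c = 0 \<longrightarrow> 1 \<notin> set cs) \<and> no01 cs)"

lemma no01_append: "no01 (A @ B) \<longleftrightarrow> no01 A \<and> no01 B \<and> (0 \<in> set A \<longrightarrow> 1 \<notin> set B)"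
  by (induction A) auto

lemma no01_nth: "no01 L \<longleftrightarrow> (\<forall>i j. i < j \<and> j < length L \<and> L ! i = 0 \<longrightarrow> L ! j \<noteq> 1)"
proof (induction L)
  case (Cons c L)
  show ?case
  proof
    assume A: "no01 (c # L)"
    show "\<forall>i j. i < j \<and> j < length (c # L) \<and> (c # L) ! i = 0 \<longrightarrow> (c # L) ! j \<noteq> 1"
    proof (intro allI impI)
      fix i j assume B: "i < j \<and> j < length (c # L) \<and> (c # L) ! i = 0"
      obtain j' where j: "j = Suc j'" using B by (cases j) auto
      show "(c # L) ! j \<noteq> 1"
      proof (cases i)
        case 0
        then have "c = 0" using B by simp
        then have "1 \<notin> set L" using A by simp
        then show ?thesis using j B by (auto simp: in_set_conv_nth)
      next
        case (Suc i')
        then show ?thesis using A Cons.IH j B by auto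
      qed
    qed
  next
    assume A: "\<forall>i j. i < j \<and> j < length (c # L) \<and> (c # L) ! i = 0 \<longrightarrow> (c # L) ! j \<noteq> 1"
    have "c = 0 \<longrightarrow> 1 \<notin> set L"
    proof
      assume "c = 0"
      show "1 \<notin> set L"
      proof
        assume "1 \<in> set L"
        then obtain j where "j < length L" "L ! j = 1" by (auto simp: in_set_conv_nth)
        then show False using A[rule_format, of 0 "Suc j"] \<open>c = 0\<close> by simp
      qed
    qed
    moreover have "no01 L" using Cons.IH A
      by (metis Suc_less_eq length_Cons nth_Cons_Suc)
    ultimately show "no01 (c # L)" by simp
  qed
qed simp

lemma Tr_iff: "u \<in> Tr n \<longleftrightarrow> length u = n \<and> set u \<subseteq> {0,1,2} \<and> u ! 0 \<noteq> 2 \<and> no01 u"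
  unfolding Tr_def no01_nth by auto

definition T :: "nat list \<Rightarrow> nat list" where
  "T u = hd u # 2 # tl u @ [0]"

definition enc :: "nat list \<Rightarrow> nat list" where
  "enc u = ewf 0 0 (T u)"

definition stp :: "nat list \<Rightarrow> nat \<Rightarrow> nat \<times> nat list \<Rightarrow> nat \<times> nat list" where
  "stp pre c s = (let (N, u) = s in
      if 2 \<le> length pre \<and> last pre = 1 \<and> c = 1 then (N + 1, u)
      else if last pre = 0 \<and> c = 1 then (0, u @ [height pre] @ replicate N 2)
      else (N, u))"

fun rs :: "nat list \<Rightarrow> nat list \<Rightarrow> nat \<times> nat list \<Rightarrow> nat \<times> nat list" where
  "rs pre [] s = s" | "rs pre (c # w) s = rs (pre @ [c]) w (stp pre c s)"

lemma fold_rs: "pre \<noteq> [] \<Longrightarrow> fold (rho_step (pre @ w)) [length pre..<length pre + length w] s = rs pre w s"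
proof (induction w arbitrary: pre s)
  case (Cons c w)
  have u0: "[length pre..<length pre + length (c # w)] = length pre # [Suc (length pre)..<length pre + length (c # w)]"
    by (rule upt_conv_Cons) simp
  have u: "[length pre..<length pre + length (c # w)] = length pre # [length (pre @ [c])..<length (pre @ [c]) + length w]"
    unfolding u0 by simp
  have st: "rho_step (pre @ c # w) (length pre) s = stp pre c s"
  proof -
    have a: "(pre @ c # w) ! (length pre - 1) = last pre" using Cons.prems
      by (simp add: nth_append last_conv_nth)
    have b: "(pre @ c # w) ! length pre = c" by simp
    have t: "take (length pre) (pre @ c # w) = pre" by simp
    show ?thesis unfolding rho_step_def stp_def a b t by simp
  qed
  have "fold (rho_step (pre @ c # w)) [length pre..<length pre + length (c # w)] s
      = fold (rho_step ((pre @ [c]) @ w)) [length (pre @ [c])..<length (pre @ [c]) + length w] (stp pre c s)"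
    unfolding u using st by simp
  also have "\<dots> = rs (pre @ [c]) w (stp pre c s)" by (rule Cons.IH) simp
  finally show ?case by simp
qed simp

lemma rho_rs: "d \<noteq> [] \<Longrightarrow> rho d = snd (rs [hd d] (tl d) (0, []))"
proof -
  assume "d \<noteq> []"
  then have d: "d = [hd d] @ tl d" by simp
  have "fold (rho_step ([hd d] @ tl d)) [length [hd d]..<length [hd d] + length (tl d)] (0, []) = rs [hd d] (tl d) (0, [])"
    by (rule fold_rs) simp
  moreover have "length [hd d] + length (tl d) = length d" using \<open>d \<noteq> []\<close> by simp
  moreover have "length [hd d] = 1" by simp
  ultimately have "fold (rho_step d) [1..<length d] (0, []) = rs [hd d] (tl d) (0, [])"
    using d by metis
  then show ?thesis unfolding rho_def by simp
qed

lemma rs_append: "rs pre (a @ b) s = rs (pre @ a) b (rs pre a s)"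
  by (induction a arbitrary: pre s) auto

lemma rs_rep0: "rs pre (replicate k 0) s = s"
  by (induction k arbitrary: pre s) (auto simp: stp_def split: prod.splits)

fun em :: "nat \<Rightarrow> nat \<Rightarrow> nat list \<Rightarrow> nat list" where
  "em v N [] = []"
| "em v N (c # cs) = (if c = 2 then em v (N + 1) cs else (v # replicate N 2) @ em c 0 cs)"

lemma em_last0: "em v N (cs @ [0]) = v # replicate N 2 @ cs"
proof (induction cs arbitrary: v N)
  case (Cons c cs)
  show ?case
  proof (cases "c = 2")
    case True
    then show ?thesis using Cons.IH[of v "N+1"] by (simp add: replicate_app_Cons_same)
  next
    case False
    then show ?thesis using Cons.IH[of c 0] by simp
  qed
qed simp

lemma count_rep: "count_list (replicate k x) y = (if x = y then k else 0)"
  by (induction k) auto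

lemma height_app0: "height (pre @ replicate k 0) = height pre - k"
  unfolding height_def by (simp add: count_rep)

lemma height_app1: "count_list pre 0 \<le> count_list pre (Suc 0) \<Longrightarrow> height (pre @ [Suc 0]) = Suc (height pre)"
  unfolding height_def by simp

lemma RS:
  assumes "2 \<le> length pre" "last pre = 1" "height pre = h" "count_list pre 0 \<le> count_list pre 1"
    "v < h" "set cs \<subseteq> {0,1,2}" "v = 0 \<longrightarrow> 1 \<notin> set cs" "no01 cs"
  shows "snd (rs pre (ewf h v cs) (N, out)) = out @ em v N cs"
  using assms
proof (induction cs arbitrary: pre h v N out)
  case Nil
  then show ?case using rs_rep0 by simp
next
  case (Cons c cs)
  show ?case
  proof (cases "c = 2")
    case True
    have s: "stp pre 1 (N, out) = (N + 1, out)" using Cons.prems unfolding stp_def by simp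
    have IH: "snd (rs (pre @ [1]) (ewf (h+1) v cs) (N+1, out)) = out @ em v (N+1) cs"
      using Cons.prems by (intro Cons.IH) (auto simp: height_app1)
    show ?thesis using True IH s by simp
  next
    case False
    then have c1: "c \<le> 1" using Cons.prems by auto
    define pre' where "pre' = pre @ replicate (h - v) 0"
    have hv: "0 < h - v" using Cons.prems by simp
    have lp: "last pre' = 0" unfolding pre'_def using hv by simp
    have hp: "height pre' = v" unfolding pre'_def using height_app0 Cons.prems by simp
    have cp: "count_list pre' 0 \<le> count_list pre' (Suc 0)"
      using Cons.prems unfolding pre'_def height_def by (simp add: count_rep)
    have s: "stp pre' 1 (N, out) = (0, out @ [v] @ replicate N 2)"
      using lp hp unfolding stp_def by simp
    have cv: "c < v + 1"
    proof (cases "c = 1")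
      case True
      then have "v \<noteq> 0" using Cons.prems by auto
      then show ?thesis using True by simp
    qed (use c1 in simp)
    have IH: "snd (rs (pre' @ [1]) (ewf (v+1) c cs) (0, out @ [v] @ replicate N 2)) = (out @ [v] @ replicate N 2) @ em c 0 cs"
    proof (rule Cons.IH)
      show "2 \<le> length (pre' @ [1])" using Cons.prems unfolding pre'_def by simp
      show "height (pre' @ [1]) = v + 1" using height_app1[OF cp] hp by simp
      show "count_list (pre' @ [1]) 0 \<le> count_list (pre' @ [1]) 1" using cp by simp
      show "c = 0 \<longrightarrow> 1 \<notin> set cs" using Cons.prems by simp
      show "no01 cs" using Cons.prems by simp
      show "set cs \<subseteq> {0,1,2}" using Cons.prems by simp
    qed (use cv in simp_all)
    have "rs pre (ewf h v (c # cs)) (N, out) = rs (pre' @ [1]) (ewf (v+1) c cs) (stp pre' 1 (N, out))"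
      unfolding ewf_n2[OF False] pre'_def by (simp add: rs_append rs_rep0)
    then show ?thesis using IH s False by simp
  qed
qed

lemma rho_enc:
  assumes "u \<in> Tr n" "1 \<le> n"
  shows "rho (enc u) = u"
proof -
  have U: "length u = n" "set u \<subseteq> {0,1,2}" "u ! 0 \<noteq> 2" "no01 u" using assms(1) Tr_iff by auto
  obtain t0 r where u: "u = t0 # r" using U(1) assms(2) by (cases u) auto
  have t0: "t0 \<le> 1" "t0 \<noteq> 2" using U u by auto
  then have n2: "t0 \<noteq> 2" by simp
  have a: "enc u = ewf 0 0 (t0 # 2 # r @ [0])" unfolding enc_def T_def u by simp
  have b: "ewf 0 0 (t0 # 2 # r @ [0]) = replicate 0 0 @ 1 # ewf 1 t0 (2 # r @ [0])"
    using ewf_n2[OF n2, of 0 0] by simp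
  have c: "ewf 1 t0 (2 # r @ [0]) = 1 # ewf 2 t0 (r @ [0])" using ewf_2[of 1 t0 "r @ [0]"] by (simp add: numeral_2_eq_2)
  have e: "enc u = 1 # 1 # ewf 2 t0 (r @ [0])" using a b c by simp
  have "rho (enc u) = snd (rs [1] (1 # ewf 2 t0 (r @ [0])) (0, []))" using rho_rs e by simp
  also have "\<dots> = snd (rs [1,1] (ewf 2 t0 (r @ [0])) (0, []))" by (simp add: stp_def)
  also have "\<dots> = [] @ em t0 0 (r @ [0])"
  proof (rule RS)
    show "height [1, 1] = 2" by (simp add: height_def)
    show "t0 < 2" using t0 by simp
    show "set (r @ [0]) \<subseteq> {0, 1, 2}" using U u by auto
    show "t0 = 0 \<longrightarrow> 1 \<notin> set (r @ [0])" using U u by auto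
    show "no01 (r @ [0])" using U u by (simp add: no01_append)
  qed simp_all
  also have "\<dots> = u" using em_last0 u by simp
  finally show ?thesis .
qed




lemma svD: "nvh h pu w = None \<Longrightarrow> \<forall>e \<in> set (sv h pu w). snd e = None"
  by (induction w arbitrary: h pu) (auto split: if_splits)

lemma svB0: "r \<Longrightarrow> \<not> bd h pu r w \<Longrightarrow> nvh h pu w = Some v \<Longrightarrow> v \<le> 0"
  by (induction w arbitrary: h pu r) (auto split: if_splits)

lemma svB: "r \<Longrightarrow> \<not> bd h pu r w \<Longrightarrow> \<forall>e \<in> set (sv h pu w). nz (snd e) \<le> 0"
proof (induction w arbitrary: h pu r)
  case (Cons c w)
  show ?case
  proof (cases "c = 1")
    case True
    have nb: "\<not> bd (h+1) True r w" using Cons.prems True by simp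
    have "nz (nvh (h+1) True w) \<le> 0" using svB0[OF Cons.prems(1) nb] unfolding nz_def by (cases "nvh (h+1) True w") auto
    then show ?thesis using Cons.IH[OF Cons.prems(1) nb] True by simp
  next
    case False
    then show ?thesis using Cons.IH[of "r \<or> h - 1 \<le> 0" "h-1" False] Cons.prems by simp
  qed
qed simp

lemma svE: "(\<not> pu \<and> h \<le> 0 \<longrightarrow> r) \<Longrightarrow> \<not> bd h pu r w \<Longrightarrow> nvh h pu w = Some v \<Longrightarrow> v \<le> 0
  \<Longrightarrow> \<forall>e \<in> set (sv h pu w). nz (snd e) \<le> 0"
proof (induction w arbitrary: h pu r)
  case (Cons c w)
  show ?case
  proof (cases "c = 1")
    case True
    show ?thesis
    proof (cases pu)
      case False
      then have "h \<le> 0" using Cons.prems True by simp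
      then have r: r using Cons.prems False by simp
      show ?thesis using svB[OF r Cons.prems(2)] .
    next
      case pu: True
      have nb: "\<not> bd (h+1) True r w" using Cons.prems True by simp
      have nv: "nvh (h+1) True w = Some v" using Cons.prems True pu by simp
      have "\<forall>e \<in> set (sv (h+1) True w). nz (snd e) \<le> 0" using Cons.IH[of True "h+1" r] nb nv Cons.prems by simp
      then show ?thesis using True nv Cons.prems unfolding nz_def by simp
    qed
  next
    case False
    then show ?thesis using Cons.IH[of False "h-1" "r \<or> h - 1 \<le> 0"] Cons.prems by simp
  qed
qed simp

lemma svF0: "\<not> bd h pu r w \<Longrightarrow> nvh h pu w = Some v \<Longrightarrow> v \<le> 1"
  by (induction w arbitrary: h pu r) (auto split: if_splits)

lemma svF: "\<not> bd h pu r w \<Longrightarrow> \<forall>e \<in> set (sv h pu w). nz (snd e) \<le> 1"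
proof (induction w arbitrary: h pu r)
  case (Cons c w)
  show ?case
  proof (cases "c = 1")
    case True
    have nb: "\<not> bd (h+1) True r w" using Cons.prems True by simp
    have "nz (nvh (h+1) True w) \<le> 1" using svF0[OF nb] unfolding nz_def by (cases "nvh (h+1) True w") auto
    then show ?thesis using Cons.IH[OF nb] True by simp
  next
    case False
    then show ?thesis using Cons.IH[of "h-1" False "r \<or> h - 1 \<le> 0"] Cons.prems by simp
  qed
qed simp

fun mono0 :: "(bool \<times> int option) list \<Rightarrow> bool" where
  "mono0 [] = True"
| "mono0 (e # L) = ((nz (snd e) \<le> 0 \<longrightarrow> (\<forall>e' \<in> set L. nz (snd e') \<le> 0)) \<and> mono0 L)"

lemma head_mono0:
  assumes "\<not> bd h True r w"
  shows "nz (nvh h True w) \<le> 0 \<longrightarrow> (\<forall>e' \<in> set (sv h True w). nz (snd e') \<le> 0)"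
proof
  assume a: "nz (nvh h True w) \<le> 0"
  show "\<forall>e' \<in> set (sv h True w). nz (snd e') \<le> 0"
  proof (cases "nvh h True w")
    case None then show ?thesis using svD[OF None] unfolding nz_def by auto
  next
    case (Some v)
    then have "v \<le> 0" using a unfolding nz_def by simp
    then show ?thesis using svE[OF _ assms Some] by simp
  qed
qed

lemma svC: "(\<not> pu \<and> h \<le> 0 \<longrightarrow> r) \<Longrightarrow> \<not> bd h pu r w \<Longrightarrow> mono0 (sv h pu w)"
proof (induction w arbitrary: h pu r)
  case (Cons c w)
  show ?case
  proof (cases "c = 1")
    case True
    have nb: "\<not> bd (h+1) True r w" using Cons.prems True by simp
    have "mono0 (sv (h+1) True w)" using Cons.IH[of True "h+1" r] nb by simp
    then show ?thesis using head_mono0[OF nb] True by simp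
  next
    case False
    then show ?thesis using Cons.IH[of False "h-1" "r \<or> h - 1 \<le> 0"] Cons.prems by simp
  qed
qed simp

lemma good_sv:
  assumes "dy d" "\<not> bd 0 False False d"
  shows "mono0 (sv 0 False d) \<and> (\<forall>e \<in> set (sv 0 False d). nz (snd e) \<le> 1)"
proof (cases d)
  case Nil then show ?thesis by simp
next
  case (Cons c w)
  then have d: "d = 1 # w" using assms(1) dy_hd by simp
  have nb: "\<not> bd 1 True False w" using assms(2) d by simp
  have "mono0 (sv 1 True w)" using svC[of True 1 False w] nb by simp
  moreover have "\<forall>e \<in> set (sv 1 True w). nz (snd e) \<le> 1" using svF[OF nb] .
  moreover have "nz (nvh 1 True w) \<le> 1" using svF0[OF nb] unfolding nz_def by (cases "nvh 1 True w") auto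
  ultimately show ?thesis using head_mono0[OF nb] d by simp
qed

lemma no01_letter: "mono0 L \<Longrightarrow> \<forall>e \<in> set L. nz (snd e) \<le> 1 \<Longrightarrow> no01 (map letter L)"
proof (induction L)
  case (Cons e L)
  have "letter e = 0 \<longrightarrow> 1 \<notin> set (map letter L)"
  proof
    assume "letter e = 0"
    then have "nz (snd e) \<le> 0" unfolding letter_def by (auto split: if_splits)
    then have "\<forall>e' \<in> set L. nz (snd e') \<le> 0" using Cons.prems by simp
    then show "1 \<notin> set (map letter L)" unfolding letter_def by auto
  qed
  then show ?case using Cons by simp
qed simp

lemma length_sv: "length (sv h pu w) = count_list w 1"
  by (induction w arbitrary: h pu) auto

lemma letter_le: "\<forall>e \<in> set L. nz (snd e) \<le> 1 \<Longrightarrow> set (map letter L) \<subseteq> {0,1,2}"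
  unfolding letter_def by (auto simp: nat_le_iff)




lemma ent_trans:
  assumes "list_all2 ent_le A B" "list_all2 ent_le B C" shows "list_all2 ent_le A C"
proof -
  have tr: "\<And>a b c. ent_le a b \<Longrightarrow> ent_le b c \<Longrightarrow> ent_le a c" by (auto simp: ent_le_def)
  show ?thesis by (rule list_all2_trans[OF tr assms])
qed

lemma G3_star: "dexter_le d d' \<Longrightarrow> list_all2 ent_le (sv 0 False d) (sv 0 False d')"
  unfolding dexter_le_def
proof (induction rule: rtranclp_induct)
  case base then show ?case using ent_le_refl by simp
next
  case (step y z) then show ?case using G3 ent_trans by blast
qed

lemma G2_star: "dexter_le d d' \<Longrightarrow> bd 0 False False d \<Longrightarrow> bd 0 False False d'"
  unfolding dexter_le_def
proof (induction rule: rtranclp_induct)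
  case base then show ?case by simp
next
  case (step y z) then show ?case using G2 by blast
qed

lemma sv_bot: "\<exists>a b L. sv 0 False (F_bot n) = a # (True, b) # L"
  unfolding F_bot_def by auto

lemma lf_top: "1 \<le> n \<Longrightarrow> lf False ([1] @ replicate n 1 @ replicate n 0) = False"
proof -
  assume n: "1 \<le> n"
  have "last ([1] @ replicate n 1 @ replicate n (0::nat)) = 0" using n by simp
  then show ?thesis using lf_last[of "[1] @ replicate n 1 @ replicate n 0" False] by simp
qed

lemma sv_top: "1 \<le> n \<Longrightarrow> \<exists>L. sv 0 False (F_top n) = L @ [(False, None)]"
proof -
  assume n: "1 \<le> n"
  define A where "A = [1] @ replicate n 1 @ replicate n (0::nat)"
  have "F_top n = A @ [1,0,0]" unfolding F_top_def A_def by simp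
  then have "sv 0 False (F_top n) = map (fx (nvh (hf A) (lf False A) [1,0,0])) (sv 0 False A) @ sv (hf A) (lf False A) [1,0,0]"
    using sv_append[of 0 False A "[1,0,0]"] by simp
  moreover have "lf False A = False" unfolding A_def using lf_top[OF n] .
  ultimately show ?thesis by simp
qed

lemma bd_rep1: "bd h True r (replicate k 1 @ Y) = bd (h + int k) True r Y"
proof (induction k arbitrary: h)
  case (Suc k)
  have "bd h True r (replicate (Suc k) 1 @ Y) = bd (h + 1) True r (replicate k 1 @ Y)" by simp
  also have "\<dots> = bd (h + 1 + int k) True r Y" by (rule Suc.IH)
  finally show ?case by (simp add: algebra_simps)
qed simp

lemma bd_top: "1 \<le> n \<Longrightarrow> \<not> bd 0 False False (F_top n)"
proof -
  assume n: "1 \<le> n"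
  have "bd 0 False False (F_top n) = bd 1 True False (replicate n 1 @ replicate n 0 @ [1,0,0])"
    unfolding F_top_def by simp
  also have "\<dots> = bd (1 + int n) True False (replicate n 0 @ [1,0,0])" by (rule bd_rep1)
  also have "\<dots> = bd 1 False (False \<or> (1::int) \<le> 0) [1,0,0]" using bd_rep0[of n "1 + int n" True False "[1,0,0]"] n by simp
  also have "\<dots> = False" by simp
  finally show ?thesis by simp
qed

lemma list_last_split: "xs \<noteq> [] \<Longrightarrow> xs = butlast xs @ [last xs]" by simp

lemma F_sub:
  assumes d: "d \<in> F n" and n: "1 \<le> n"
  shows "\<exists>u. u \<in> Tr n \<and> d = enc u \<and> T u = dec d"
proof -
  have dd: "dyck d" "length d = 2 * (n + 2)" "dexter_le (F_bot n) d" "dexter_le d (F_top n)"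
    using d unfolding F_def by auto
  have D: "dy d" using dd(1) dyck_dy by simp
  have nb: "\<not> bd 0 False False d" using G2_star[OF dd(4)] bd_top[OF n] by blast
  have G: "mono0 (sv 0 False d)" "\<forall>e \<in> set (sv 0 False d). nz (snd e) \<le> 1" using good_sv[OF D nb] by auto
  have dec: "ewf 0 0 (dec d) = d" using decode[OF D G(2)] .
  define S where "S = sv 0 False d"
  have lenS: "length S = n + 2"
  proof -
    have "length d = 2 * count_list d 1" using dy_length[OF D] .
    then show ?thesis unfolding S_def length_sv using dd(2) by simp
  qed
  have L1: "list_all2 ent_le (sv 0 False (F_bot n)) S" using G3_star[OF dd(3)] unfolding S_def .
  have L2: "list_all2 ent_le S (sv 0 False (F_top n))" using G3_star[OF dd(4)] unfolding S_def .
  obtain a b L where bot: "sv 0 False (F_bot n) = a # (True, b) # L" using sv_bot by blast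
  have f1: "fst (S ! 1)" using L1 unfolding bot by (auto simp: list_all2_Cons1 ent_le_def)
  obtain L' where top: "sv 0 False (F_top n) = L' @ [(False, None)]" using sv_top[OF n] by blast
  have "length L' = n + 1" using list_all2_lengthD[OF L2] lenS top by simp
  then have ln: "(L' @ [(False, None)]) ! (n+1) = (False, None)" by (simp add: nth_append)
  have "ent_le (S ! (n+1)) ((L' @ [(False, None)]) ! (n+1))" using L2 lenS top
    by (auto simp: list_all2_conv_all_nth)
  then have "ent_le (S ! (n+1)) (False, None)" unfolding ln .
  then have flast: "\<not> fst (S ! (n+1))" "nz (snd (S ! (n+1))) \<le> 0"
    by (auto simp: ent_le_def nz_def)
  obtain w where dw: "d = 1 # w" using D dy_hd dd(2) by (cases d) auto
  have f0: "\<not> fst (S ! 0)" unfolding S_def dw by simp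
  define t where "t = dec d"
  have tS: "t = map letter S" unfolding t_def dec_def S_def by simp
  have lent: "length t = n + 2" using lenS tS by simp
  have t1: "t ! 1 = 2" using f1 lenS tS by (simp add: letter_def)
  have tlast: "t ! (n+1) = 0" using flast lenS tS by (simp add: letter_def)
  have "S ! 0 \<in> set S" using lenS by simp
  then have "nz (snd (S ! 0)) \<le> 1" using G(2) unfolding S_def by blast
  then have t0: "t ! 0 \<noteq> 2" using f0 lenS tS by (auto simp: letter_def)
  have tset: "set t \<subseteq> {0,1,2}" using letter_le[OF G(2)] tS S_def by simp
  have tno: "no01 t" using no01_letter[OF G] tS S_def by simp
  obtain t0' t1' r where tt: "t = t0' # t1' # r" using lent by (cases t; cases "tl t") auto
  have lr: "length r = n" using lent tt by simp
  then have rne: "r \<noteq> []" using n by auto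
  have "(t1' # r) ! n = 0" using tlast tt by simp
  moreover have "(t1' # r) ! n = r ! (n - 1)" using n by (cases n) auto
  ultimately have lastr: "last r = 0" using lr rne by (simp add: last_conv_nth)
  define u where "u = t0' # butlast r"
  have Tu: "T u = t"
  proof -
    have "T u = t0' # 2 # butlast r @ [0]" unfolding T_def u_def by simp
    also have "\<dots> = t0' # 2 # r" using list_last_split[OF rne] lastr by simp
    also have "\<dots> = t" using tt t1 by simp
    finally show ?thesis .
  qed
  have uTr: "u \<in> Tr n"
    unfolding Tr_iff
  proof (intro conjI)
    show "length u = n" unfolding u_def using lr n by simp
    show "set u \<subseteq> {0,1,2}" using tset tt unfolding u_def by (auto dest: in_set_butlastD)
    show "u ! 0 \<noteq> 2" using t0 tt unfolding u_def by simp
    have "no01 (t0' # 2 # butlast r @ [0])" using tno Tu unfolding T_def u_def by simp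
    then show "no01 u" unfolding u_def by (simp add: no01_append)
  qed
  have "d = enc u" unfolding enc_def Tu t_def using dec by simp
  then show ?thesis using uTr Tu unfolding t_def by blast
qed




lemma ewf_rest: "\<exists>S. (S = [] \<or> hd S = 1) \<and> (\<forall>k. ewf k 0 rest = replicate k 0 @ S)"
  if "rest = [] \<or> hd rest \<noteq> 2"
proof (cases rest)
  case Nil then show ?thesis by simp
next
  case (Cons c R)
  then have c: "c \<noteq> 2" using that by simp
  show ?thesis
    by (rule exI[of _ "1 # ewf 1 c R"]) (simp add: Cons ewf_n2[OF c])
qed

lemma split2: "\<exists>j rest. C = replicate j 2 @ rest \<and> (rest = [] \<or> hd rest \<noteq> 2)"
proof -
  define j where "j = length (takeWhile (\<lambda>c. c = 2) C)"
  have "takeWhile (\<lambda>c. c = 2) C = replicate j 2"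
    unfolding j_def by (metis (mono_tags, lifting) replicate_length_same set_takeWhileD)
  moreover have "dropWhile (\<lambda>c. c = 2) C = [] \<or> hd (dropWhile (\<lambda>c. c = 2) C) \<noteq> 2"
    using hd_dropWhile by blast
  ultimately show ?thesis by (metis takeWhile_dropWhile_id)
qed

lemma SA:
  assumes L: "set (A @ [0] @ replicate j 2 @ [0] @ C) \<subseteq> {0,1,2}"
  shows "dexter_cover (ewf 0 0 (A @ [0] @ replicate j 2 @ [0] @ C)) (ewf 0 0 (A @ [1] @ replicate j 2 @ [0] @ C))"
proof -
  obtain h v where hv: "st 0 0 A = (h, v)" by fastforce
  obtain j' rest where C: "C = replicate j' 2 @ rest" "rest = [] \<or> hd rest \<noteq> 2" using split2 by blast
  obtain S where S: "S = [] \<or> hd S = 1" "\<And>k. ewf k 0 rest = replicate k 0 @ S" using ewf_rest[OF C(2)] by blast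
  have z: "0 \<noteq> (2::nat)" "1 \<noteq> (2::nat)" by simp_all
  have C1: "ewf 1 0 C = replicate j' 1 @ replicate (1 + j') 0 @ S" unfolding C(1) ewf_rep2 S(2) by simp
  have C2: "ewf 2 0 C = replicate j' 1 @ replicate (2 + j') 0 @ S" unfolding C(1) ewf_rep2 S(2) by simp
  have e1: "ewf 0 0 (A @ [0] @ replicate j 2 @ [0] @ C) =
      ew 0 0 A @ replicate (h - v) 0 @ 1 # replicate j 1 @ replicate (v + 1 + j) 0 @ 1 # replicate j' 1 @ replicate (1 + j') 0 @ S"
  proof -
    have "ewf 0 0 (A @ [0] @ replicate j 2 @ [0] @ C) = ew 0 0 A @ ewf h v (0 # replicate j 2 @ 0 # C)"
      using hv ewf_append[of 0 0 A "0 # replicate j 2 @ 0 # C"] by simp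
    also have "ewf h v (0 # replicate j 2 @ 0 # C) = replicate (h - v) 0 @ 1 # ewf (v+1) 0 (replicate j 2 @ 0 # C)"
      by (rule ewf_n2[OF z(1)])
    also have "ewf (v+1) 0 (replicate j 2 @ 0 # C) = replicate j 1 @ ewf (v+1+j) 0 (0 # C)" by (rule ewf_rep2)
    also have "ewf (v+1+j) 0 (0 # C) = replicate (v+1+j - 0) 0 @ 1 # ewf (0+1) 0 C" by (rule ewf_n2[OF z(1)])
    finally show ?thesis using C1 by simp
  qed
  have e2: "ewf 0 0 (A @ [1] @ replicate j 2 @ [0] @ C) =
      ew 0 0 A @ replicate (h - v) 0 @ 1 # replicate j 1 @ replicate (v + j) 0 @ 1 # replicate j' 1 @ replicate (2 + j') 0 @ S"
  proof -
    have "ewf 0 0 (A @ [1] @ replicate j 2 @ [0] @ C) = ew 0 0 A @ ewf h v (1 # replicate j 2 @ 0 # C)"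
      using hv ewf_append[of 0 0 A "1 # replicate j 2 @ 0 # C"] by simp
    also have "ewf h v (1 # replicate j 2 @ 0 # C) = replicate (h - v) 0 @ 1 # ewf (v+1) 1 (replicate j 2 @ 0 # C)"
      by (rule ewf_n2[OF z(2)])
    also have "ewf (v+1) 1 (replicate j 2 @ 0 # C) = replicate j 1 @ ewf (v+1+j) 1 (0 # C)" by (rule ewf_rep2)
    also have "ewf (v+1+j) 1 (0 # C) = replicate (v+1+j - 1) 0 @ 1 # ewf (1+1) 0 C" by (rule ewf_n2[OF z(1)])
    also have "(1::nat) + 1 = 2" by simp
    finally show ?thesis using C2 by simp
  qed
  define p where "p = ew 0 0 A @ replicate (h - v) 0 @ replicate j 1"
  define x where "x = replicate (Suc j') 1 @ replicate (Suc j') (0::nat)"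
  have d1: "ewf 0 0 (A @ [0] @ replicate j 2 @ [0] @ C) = p @ [1] @ replicate (v + 1 + j) 0 @ x @ S"
    unfolding e1 p_def x_def by (simp add: replicate_append_same[symmetric])
  have d2: "ewf 0 0 (A @ [1] @ replicate j 2 @ [0] @ C) = p @ [1] @ replicate (v + j) 0 @ x @ replicate 1 0 @ S"
    unfolding e2 p_def x_def by (simp add: replicate_append_same[symmetric] replicate_add[symmetric])
  have dy: "dyck (ewf 0 0 (A @ [0] @ replicate j 2 @ [0] @ C))" using ewf_dy[OF L] dyck_dy by simp
  show ?thesis unfolding dexter_cover_def
    apply (rule conjI[OF dy])
    apply (rule exI[of _ p], rule exI[of _ "v + 1 + j"], rule exI[of _ x], rule exI[of _ S],
           rule exI[of _ "v + j"], rule exI[of _ 1])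
    using d1 d2 S(1) pyr_prim[of "Suc j'"] unfolding x_def by simp
qed

lemma SB:
  assumes L: "set (A @ c # replicate j 2 @ c' # C) \<subseteq> {0,1,2}"
    and hv: "st 0 0 A = (h, c)" "c < h" "c \<noteq> 2" "c' \<noteq> 2" "A \<noteq> []"
  shows "dexter_cover (ewf 0 0 (A @ c # replicate j 2 @ c' # C)) (ewf 0 0 (A @ 2 # replicate j 2 @ c' # C))"
proof -
  obtain p where p: "ew 0 0 A = p @ [1]" using ew_nonempty[OF hv(5)] by blast
  define S where "S = 1 # ewf (c + 1) c' C"
  have e1: "ewf 0 0 (A @ c # replicate j 2 @ c' # C) =
      ew 0 0 A @ replicate (h - c) 0 @ 1 # replicate j 1 @ replicate (Suc j) 0 @ S"
  proof -
    have "ewf 0 0 (A @ c # replicate j 2 @ c' # C) = ew 0 0 A @ ewf h c (c # replicate j 2 @ c' # C)"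
      using hv by (simp add: ewf_append)
    also have "ewf h c (c # replicate j 2 @ c' # C) = replicate (h - c) 0 @ 1 # replicate j 1 @ ewf (c + 1 + j) c (c' # C)"
      using hv by (simp add: ewf_n2 ewf_rep2)
    also have "ewf (c + 1 + j) c (c' # C) = replicate (Suc j) 0 @ S"
      unfolding S_def using hv by (simp add: ewf_n2)
    finally show ?thesis by simp
  qed
  have e2: "ewf 0 0 (A @ 2 # replicate j 2 @ c' # C) =
      ew 0 0 A @ 1 # replicate j 1 @ replicate (Suc j) 0 @ replicate (h - c) 0 @ S"
  proof -
    have "ewf 0 0 (A @ 2 # replicate j 2 @ c' # C) = ew 0 0 A @ ewf h c (2 # replicate j 2 @ c' # C)"
      using hv by (simp add: ewf_append)
    also have "ewf h c (2 # replicate j 2 @ c' # C) = 1 # replicate j 1 @ ewf (h + 1 + j) c (c' # C)"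
      by (simp add: ewf_rep2)
    also have "ewf (h + 1 + j) c (c' # C) = replicate (h + 1 + j - c) 0 @ S"
      unfolding S_def using hv by (simp add: ewf_n2)
    also have "h + 1 + j - c = Suc j + (h - c)" using hv by simp
    finally show ?thesis by (simp add: replicate_add)
  qed
  define x where "x = replicate (Suc j) 1 @ replicate (Suc j) (0::nat)"
  have d1: "ewf 0 0 (A @ c # replicate j 2 @ c' # C) = p @ [1] @ replicate (h - c) 0 @ x @ S"
    unfolding e1 p x_def by (simp add: replicate_append_same[symmetric])
  have d2: "ewf 0 0 (A @ 2 # replicate j 2 @ c' # C) = p @ [1] @ replicate 0 0 @ x @ replicate (h - c) 0 @ S"
    unfolding e2 p x_def by (simp add: replicate_append_same[symmetric])
  have dy: "dyck (ewf 0 0 (A @ c # replicate j 2 @ c' # C))" using ewf_dy[OF L] dyck_dy by simp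
  have m: "0 < h - c" using hv by simp
  show ?thesis unfolding dexter_cover_def
    apply (rule conjI[OF dy])
    apply (rule exI[of _ p], rule exI[of _ "h - c"], rule exI[of _ x], rule exI[of _ S],
           rule exI[of _ 0], rule exI[of _ "h - c"])
    using d1 d2 m pyr_prim[of "Suc j"] unfolding x_def S_def by simp
qed




lemma st_inv: "v < h \<Longrightarrow> set A \<subseteq> {0,1,2} \<Longrightarrow> (v = 0 \<longrightarrow> 1 \<notin> set A) \<Longrightarrow> no01 A
  \<Longrightarrow> snd (st h v A) < fst (st h v A)"
proof (induction A arbitrary: h v)
  case (Cons c A)
  show ?case
  proof (cases "c = 2")
    case True then show ?thesis using Cons by simp
  next
    case False
    then have "c \<le> 1" using Cons.prems by auto
    moreover have "c = 1 \<longrightarrow> v \<noteq> 0" using Cons.prems by auto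
    ultimately have "c < v + 1" by auto
    then show ?thesis using Cons False by simp
  qed
qed simp

lemma st_pend: "v \<noteq> 2 \<Longrightarrow> snd (st h v A) \<in> insert v (set A) \<and> snd (st h v A) \<noteq> 2"
proof (induction A arbitrary: h v)
  case (Cons c A)
  then show ?case by (cases "c = 2") auto
qed simp

lemma st_all2: "set A \<subseteq> {2} \<Longrightarrow> snd (st h v A) = v"
  by (induction A arbitrary: h) auto

lemma st_L2: "set A \<subseteq> {0,1,2} \<Longrightarrow> no01 A \<Longrightarrow> 0 \<in> set A \<Longrightarrow> snd (st h v A) = 0"
proof (induction A arbitrary: h v)
  case (Cons c A)
  show ?case
  proof (cases "0 \<in> set A")
    case True then show ?thesis using Cons by (cases "c = 2") auto
  next
    case False
    then have c: "c = 0" using Cons.prems by auto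
    then have "1 \<notin> set A" using Cons.prems by simp
    then have "set A \<subseteq> {2}" using Cons.prems False by auto
    then show ?thesis using c st_all2 by simp
  qed
qed simp

lemma first_diff: "list_all2 P u v \<Longrightarrow> u \<noteq> v \<Longrightarrow>
  \<exists>B a R b R'. u = B @ a # R \<and> v = B @ b # R' \<and> a \<noteq> b \<and> P a b \<and> list_all2 P R R'"
proof (induction rule: list_all2_induct)
  case Nil then show ?case by simp
next
  case (Cons x xs y ys)
  show ?case
  proof (cases "x = y")
    case True
    then have "xs \<noteq> ys" using Cons by simp
    then obtain B a R b R' where "xs = B @ a # R" "ys = B @ b # R'" "a \<noteq> b" "P a b" "list_all2 P R R'"
      using Cons.IH by blast
    then show ?thesis using True by (intro exI[of _ "x # B"]) auto
  next
    case False
    then show ?thesis using Cons by (intro exI[of _ "[]"]) auto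
  qed
qed

lemma split_first0: "set (R::nat list) \<subseteq> {0,2} \<Longrightarrow> 0 \<in> set R \<Longrightarrow> \<exists>j C. R = replicate j 2 @ 0 # C"
proof -
  assume a: "set R \<subseteq> {0,2}" "0 \<in> set R"
  obtain j rest where r: "R = replicate j 2 @ rest" "rest = [] \<or> hd rest \<noteq> 2" using split2 by blast
  have "rest \<noteq> []" using a r by auto
  then obtain c C where "rest = c # C" by (cases rest) auto
  moreover have "c \<in> {0,2}" using a r calculation by auto
  ultimately show ?thesis using r by auto
qed

lemma split_first: "set (R::nat list) \<subseteq> {0,1,2} \<Longrightarrow> 0 \<in> set R \<Longrightarrow> \<exists>j c C. R = replicate j 2 @ c # C \<and> c \<noteq> 2"
proof -
  assume a: "set R \<subseteq> {0,1,2}" "0 \<in> set R"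
  obtain j rest where r: "R = replicate j 2 @ rest" "rest = [] \<or> hd rest \<noteq> 2" using split2 by blast
  have "rest \<noteq> []" using a r by auto
  then obtain c C where "rest = c # C" by (cases rest) auto
  then show ?thesis using r by auto
qed

definition TA :: "nat list \<Rightarrow> nat list" where
  "TA B = (case B of [] \<Rightarrow> [] | b0 # B' \<Rightarrow> b0 # 2 # B')"

definition TR :: "nat list \<Rightarrow> nat list \<Rightarrow> nat list" where
  "TR B R = (if B = [] then 2 # R @ [0] else R @ [0])"

lemma T_split: "T (B @ c # R) = TA B @ c # TR B R"
  unfolding T_def TA_def TR_def by (cases B) auto

lemma step:
  assumes u: "u \<in> Tr n" and v: "v \<in> Tr n" and le: "list_all2 (\<le>) u v" and ne: "u \<noteq> v"
  shows "\<exists>u1. u1 \<in> Tr n \<and> list_all2 (\<le>) u1 v \<and> sum_list u < sum_list u1 \<and> dexter_cover (enc u) (enc u1)"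
proof -
  obtain B a R b R' where d: "u = B @ a # R" "v = B @ b # R'" "a \<noteq> b" "a \<le> b" "list_all2 (\<le>) R R'"
    using first_diff[OF le ne] by blast
  have U: "length u = n" "set u \<subseteq> {0,1,2}" "u ! 0 \<noteq> 2" "no01 u" using u Tr_iff by auto
  have V: "length v = n" "set v \<subseteq> {0,1,2}" "v ! 0 \<noteq> 2" "no01 v" using v Tr_iff by auto
  have ab: "a < b" "b \<le> 2" using d V by auto
  define A where "A = TA B"
  define Rt where "Rt = TR B R"
  have Tu: "T u = A @ a # Rt" unfolding A_def Rt_def d(1) T_split ..
  have une: "u \<noteq> []" using d(1) by simp
  have setTu: "set (T u) \<subseteq> {0,1,2}" unfolding T_def using U une by (cases u) auto
  have Rt0: "0 \<in> set Rt" unfolding Rt_def TR_def by simp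
  have setRt: "set Rt \<subseteq> {0,1,2}" using setTu Tu by auto
  have setA: "set A \<subseteq> {0,1,2}" using setTu Tu by auto
  have noB: "no01 B" "no01 (a # R)" "0 \<in> set B \<longrightarrow> 1 \<notin> set (a # R)" using U(4) d(1) no01_append by auto
  have lens: "length u = length v" using list_all2_lengthD[OF le] .
  have sums: "sum_list (B @ c # R) = sum_list u + c - a" for c using d(1) by simp
  
  have mk: "u1 \<in> Tr n \<and> list_all2 (\<le>) u1 v \<and> sum_list u < sum_list u1"
    if u1: "u1 = B @ c # R" and cb: "a < c" "c \<le> b" and c0: "B = [] \<longrightarrow> c \<noteq> 2"
      and nn: "0 \<in> set B \<longrightarrow> c \<noteq> 1" for u1 c
  proof (intro conjI)
    show "u1 \<in> Tr n" unfolding Tr_iff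
    proof (intro conjI)
      show "length u1 = n" using U u1 d by simp
      show "set u1 \<subseteq> {0,1,2}" using U u1 d cb ab by auto
      show "u1 ! 0 \<noteq> 2" using U u1 d c0 by (cases B) auto
      have "1 \<notin> set R" if "0 \<in> set B" using noB that by simp
      moreover have "c = 0 \<longrightarrow> 1 \<notin> set R" using cb by simp
      ultimately show "no01 u1" unfolding u1 using noB nn by (auto simp: no01_append)
    qed
    have "list_all2 (\<le>) B B" by (rule list_all2_refl) simp
    then show "list_all2 (\<le>) u1 v" unfolding u1 d(2) using d(5) cb by (simp add: list_all2_appendI)
    show "sum_list u < sum_list u1" unfolding u1 d(1) using cb by simp
  qed
  have B2: "B \<noteq> []" if "b = 2" using V d(2) that by (cases B) auto
  
  obtain hA pA where stA: "st 0 0 A = (hA, pA)" by fastforce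
  have merge: "\<exists>u1. u1 \<in> Tr n \<and> list_all2 (\<le>) u1 v \<and> sum_list u < sum_list u1 \<and> dexter_cover (enc u) (enc u1)"
    if b2: "b = 2" and pa: "pA = a" for dummy :: nat
  proof -
    have Bne: "B \<noteq> []" using B2 b2 .
    then obtain b0 B' where B: "B = b0 # B'" by (cases B) auto
    have b0: "b0 \<le> 1" using U d(1) B by auto
    have A: "A = b0 # 2 # B'" unfolding A_def TA_def B by simp
    have stA2: "st 0 0 A = st 2 b0 B'" unfolding A using b0 by (simp add: numeral_2_eq_2)
    have inv: "snd (st 2 b0 B') < fst (st 2 b0 B')"
    proof (rule st_inv)
      show "b0 < 2" using b0 by simp
      show "set B' \<subseteq> {0,1,2}" using U d(1) B by auto
      show "b0 = 0 \<longrightarrow> 1 \<notin> set B'" using noB B by simp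
      show "no01 B'" using noB B by simp
    qed
    then have hp: "pA < hA" using stA stA2 by simp
    have Rt': "Rt = R @ [0]" unfolding Rt_def TR_def using Bne by simp
    obtain j c' C where R: "Rt = replicate j 2 @ c' # C" "c' \<noteq> 2" using split_first[OF setRt Rt0] by blast
    have a2: "a \<noteq> 2" using ab b2 by simp
    have cov: "dexter_cover (ewf 0 0 (A @ a # replicate j 2 @ c' # C)) (ewf 0 0 (A @ 2 # replicate j 2 @ c' # C))"
    proof (rule SB)
      show "set (A @ a # replicate j 2 @ c' # C) \<subseteq> {0,1,2}" using setTu Tu R by simp
      show "st 0 0 A = (hA, a)" using stA pa by simp
      show "a < hA" using hp pa by simp
      show "A \<noteq> []" using A by simp
    qed (use a2 R in auto)
    define u1 where "u1 = B @ 2 # R"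
    have "T u1 = A @ 2 # Rt" unfolding u1_def A_def Rt_def T_split ..
    then have "dexter_cover (enc u) (enc u1)" using cov Tu R unfolding enc_def by simp
    moreover have "u1 \<in> Tr n \<and> list_all2 (\<le>) u1 v \<and> sum_list u < sum_list u1"
      by (rule mk[OF u1_def]) (use ab b2 Bne in auto)
    ultimately show ?thesis by blast
  qed
  have raise: "\<exists>u1. u1 \<in> Tr n \<and> list_all2 (\<le>) u1 v \<and> sum_list u < sum_list u1 \<and> dexter_cover (enc u) (enc u1)"
    if a0: "a = 0" and nb: "0 \<in> set B \<longrightarrow> False" and b1: "B = [] \<longrightarrow> b = 1" for dummy :: nat
  proof -
    have "1 \<notin> set R" using noB a0 by simp
    then have "set Rt \<subseteq> {0,2}" using setRt unfolding Rt_def TR_def by (auto split: if_splits)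
    then obtain j C where R: "Rt = replicate j 2 @ 0 # C" using split_first0 Rt0 by blast
    have cov: "dexter_cover (ewf 0 0 (A @ [0] @ replicate j 2 @ [0] @ C)) (ewf 0 0 (A @ [1] @ replicate j 2 @ [0] @ C))"
      by (rule SA) (use setTu Tu R a0 in simp)
    define u1 where "u1 = B @ 1 # R"
    have "T u1 = A @ 1 # Rt" unfolding u1_def A_def Rt_def T_split ..
    then have "dexter_cover (enc u) (enc u1)" using cov Tu R a0 unfolding enc_def by simp
    moreover have "u1 \<in> Tr n \<and> list_all2 (\<le>) u1 v \<and> sum_list u < sum_list u1"
      by (rule mk[OF u1_def]) (use ab a0 nb in auto)
    ultimately show ?thesis by blast
  qed
  have pA_props: "pA \<in> set B \<and> pA \<noteq> 2" if Bn: "B \<noteq> []"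
  proof -
    obtain b0 B' where B: "B = b0 # B'" using Bn by (cases B) auto
    have b0: "b0 \<noteq> 2" using U d(1) B by auto
    have A: "A = b0 # 2 # B'" unfolding A_def TA_def B by simp
    have "snd (st 0 0 A) \<in> insert 0 (set A) \<and> snd (st 0 0 A) \<noteq> 2" using st_pend[of 0 0 A] by simp
    moreover have "snd (st 0 0 A) = snd (st 1 b0 (2 # B'))" unfolding A using b0 by simp
    moreover have "snd (st 1 b0 (2 # B')) \<in> insert b0 (set (2 # B')) \<and> snd (st 1 b0 (2 # B')) \<noteq> 2"
      using st_pend[OF b0] by blast
    ultimately show ?thesis using stA B by auto
  qed
  show ?thesis
  proof (cases "a = 0")
    case a0: True
    show ?thesis
    proof (cases "b = 1")
      case True
      have "0 \<notin> set B" using V d(2) True no01_append by auto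
      then show ?thesis using raise[OF a0] True by blast
    next
      case False
      then have b2: "b = 2" using ab a0 by simp
      have Bne: "B \<noteq> []" using B2 b2 .
      show ?thesis
      proof (cases "pA = 0")
        case True then show ?thesis using merge[OF b2] a0 by blast
      next
        case False
        have "0 \<notin> set B"
        proof
          assume "0 \<in> set B"
          obtain b0 B' where B: "B = b0 # B'" using Bne by (cases B) auto
          have "0 \<in> set A" using \<open>0 \<in> set B\<close> unfolding A_def TA_def B by auto
          moreover have "no01 A"
          proof -
            have "no01 B" using noB by simp
            then show ?thesis unfolding A_def TA_def B by auto
          qed
          ultimately have "snd (st 0 0 A) = 0" using st_L2 setA by blast
          then show False using False stA by simp
        qed
        then show ?thesis using raise[OF a0] Bne by blast
      qed
    qed
  next
    case False
    then have a1: "a = 1" "b = 2" using ab by auto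
    have Bne: "B \<noteq> []" using B2 a1(2) .
    have "pA \<in> set B" "pA \<noteq> 2" using pA_props[OF Bne] by auto
    moreover have "pA \<noteq> 0"
    proof
      assume "pA = 0"
      then have "0 \<in> set B" using \<open>pA \<in> set B\<close> by simp
      then show False using noB a1 by simp
    qed
    moreover have "pA \<le> 2" using \<open>pA \<in> set B\<close> U d(1) by auto
    ultimately have "pA = 1" by auto
    then show ?thesis using merge[OF a1(2)] a1 by simp
  qed
qed




lemma sum_mono2: "list_all2 (\<le>) u v \<Longrightarrow> sum_list u \<le> sum_list (v :: nat list)"
  by (induction rule: list_all2_induct) auto

lemma chain:
  assumes "u \<in> Tr n" "v \<in> Tr n" "list_all2 (\<le>) u v"
  shows "dexter_le (enc u) (enc v)"
  using assms
proof (induction "sum_list v - sum_list u" arbitrary: u rule: less_induct)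
  case less
  show ?case
  proof (cases "u = v")
    case True then show ?thesis unfolding dexter_le_def by simp
  next
    case False
    obtain u1 where u1: "u1 \<in> Tr n" "list_all2 (\<le>) u1 v" "sum_list u < sum_list u1" "dexter_cover (enc u) (enc u1)"
      using step[OF less.prems False] by blast
    have "sum_list u1 \<le> sum_list v" using sum_mono2[OF u1(2)] .
    then have "sum_list v - sum_list u1 < sum_list v - sum_list u" using u1(3) by simp
    then have "dexter_le (enc u1) (enc v)" using less.hyps u1(1,2) less.prems(2) by blast
    then show ?thesis using u1(4) unfolding dexter_le_def by (meson converse_rtranclp_into_rtranclp)
  qed
qed

lemma cc: "1 # concat (replicate m [0,1]) @ [0] = concat (replicate (Suc m) [1,(0::nat)])"
  by (induction m) auto

lemma ewf10: "ewf 1 0 (replicate k 0) = concat (replicate k [0,1]) @ [0]"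
proof (induction k)
  case 0 then show ?case by simp
next
  case (Suc k)
  have z: "(0::nat) \<noteq> 2" by simp
  have "ewf 1 0 (replicate (Suc k) 0) = replicate (1 - 0) 0 @ 1 # ewf (0 + 1) 0 (replicate k 0)"
    using ewf_n2[OF z, of 1 0 "replicate k 0"] by simp
  then show ?case using Suc by simp
qed

lemma ewf10': "ewf (Suc 0) 0 (replicate k 0) = concat (replicate k [0, Suc 0]) @ [0]"
  using ewf10 by simp

lemma no01_rep0: "no01 (replicate m 0)"
  by (induction m) auto

lemma no01_rep2: "no01 (replicate m 2)"
  by (induction m) auto

lemma enc_bot: "1 \<le> n \<Longrightarrow> enc (replicate n 0) = F_bot n"
proof -
  assume "1 \<le> n"
  then obtain m where n: "n = Suc m" by (cases n) auto
  have z: "(0::nat) \<noteq> 2" by simp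
  have T: "T (replicate n 0) = 0 # 2 # 0 # replicate m 0"
    unfolding T_def n by (simp add: replicate_append_same)
  have "ewf 0 0 (0 # 2 # 0 # replicate m 0) = replicate 0 0 @ 1 # ewf 1 0 (2 # 0 # replicate m 0)"
    using ewf_n2[OF z, of 0 0] by simp
  also have "ewf 1 0 (2 # 0 # replicate m 0) = 1 # ewf 2 0 (0 # replicate m 0)"
    using ewf_2[of 1 0] by (simp add: numeral_2_eq_2)
  also have "ewf 2 0 (0 # replicate m 0) = replicate 2 0 @ 1 # ewf 1 0 (replicate m 0)"
    using ewf_n2[OF z, of 2 0] by simp
  finally have "enc (replicate n 0) = [1,1,0,0] @ (1 # concat (replicate m [0,1]) @ [0])"
    unfolding enc_def T by (simp add: ewf10' numeral_2_eq_2)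
  then show ?thesis unfolding F_bot_def cc n .
qed

lemma enc_top: "1 \<le> n \<Longrightarrow> enc (1 # replicate (n - 1) 2) = F_top n"
proof -
  assume n1: "1 \<le> n"
  have o: "(1::nat) \<noteq> 2" "(0::nat) \<noteq> 2" by simp_all
  have T: "T (1 # replicate (n - 1) 2) = 1 # replicate n 2 @ [0]"
    unfolding T_def using n1 by (cases n) auto
  have "ewf 0 0 (1 # replicate n 2 @ [0]) = replicate 0 0 @ 1 # ewf 1 1 (replicate n 2 @ [0])"
    using ewf_n2[OF o(1), of 0 0] by simp
  also have "ewf 1 1 (replicate n 2 @ [0]) = replicate n 1 @ ewf (1 + n) 1 [0]" by (rule ewf_rep2)
  also have "ewf (1 + n) 1 [0] = replicate (1 + n - 1) 0 @ 1 # ewf (1 + 1) 0 []" by (rule ewf_n2[OF o(2)])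
  finally show ?thesis unfolding enc_def T F_top_def by (simp add: numeral_2_eq_2)
qed

lemma Tr_ne: "u \<in> Tr n \<Longrightarrow> 1 \<le> n \<Longrightarrow> u \<noteq> []"
  unfolding Tr_iff by auto

lemma enc_F:
  assumes u: "u \<in> Tr n" and n: "1 \<le> n"
  shows "enc u \<in> F n"
proof -
  have U: "length u = n" "set u \<subseteq> {0,1,2}" "u ! 0 \<noteq> 2" "no01 u" using u Tr_iff by auto
  obtain u0 r where ur: "u = u0 # r" using U(1) n by (cases u) auto
  have setT: "set (T u) \<subseteq> {0,1,2}" unfolding T_def ur using U ur by auto
  have D: "dy (enc u)" unfolding enc_def by (rule ewf_dy[OF setT])
  have cnt: "count_list (enc u) 1 = n + 2" unfolding enc_def using ewf_props[of 0 0 "T u"] setT U(1) ur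
    by (simp add: T_def)
  have len: "length (enc u) = 2 * (n + 2)" using dy_length[OF D] cnt by simp
  have botTr: "replicate n 0 \<in> Tr n" unfolding Tr_iff using n no01_rep0 by (cases n) auto
  have topTr: "1 # replicate (n - 1) 2 \<in> Tr n" unfolding Tr_iff using n no01_rep2 by (cases n) auto
  have le1: "list_all2 (\<le>) (replicate n 0) u" using U(1) by (simp add: list_all2_conv_all_nth)
  have le2: "list_all2 (\<le>) u (1 # replicate (n - 1) 2)"
  proof -
    have "u0 \<le> 1" using U ur by auto
    moreover have "list_all2 (\<le>) r (replicate (n - 1) 2)" using U ur
      by (auto simp: list_all2_conv_all_nth dest!: nth_mem[of _ r])
    ultimately show ?thesis unfolding ur by simp
  qed
  have "dexter_le (F_bot n) (enc u)" using chain[OF botTr u le1] enc_bot[OF n] by simp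
  moreover have "dexter_le (enc u) (F_top n)" using chain[OF u topTr le2] enc_top[OF n] by simp
  ultimately show ?thesis unfolding F_def using D len dyck_dy by simp
qed

lemma letter_mono: "ent_le e e' \<Longrightarrow> nz (snd e) \<le> 1 \<Longrightarrow> letter e \<le> letter e'"
  unfolding ent_le_def letter_def by auto

lemma order_fwd:
  assumes d: "d \<in> F n" and d': "d' \<in> F n" and le: "dexter_le d d'" and n: "1 \<le> n"
  shows "tr_le (rho d) (rho d')"
proof -
  obtain u where u: "u \<in> Tr n" "d = enc u" "T u = dec d" using F_sub[OF d n] by blast
  obtain u' where u': "u' \<in> Tr n" "d' = enc u'" "T u' = dec d'" using F_sub[OF d' n] by blast
  have Dd: "dy d" using d unfolding F_def dyck_dy by simp
  have nb: "\<not> bd 0 False False d" using G2_star[of d "F_top n"] bd_top[OF n] d unfolding F_def by blast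
  have G: "\<forall>e \<in> set (sv 0 False d). nz (snd e) \<le> 1" using good_sv[OF Dd nb] by simp
  have L: "list_all2 ent_le (sv 0 False d) (sv 0 False d')" using G3_star[OF le] .
  have "list_all2 (\<le>) (dec d) (dec d')"
    unfolding dec_def list.rel_map using L G
    by (auto simp: list_all2_conv_all_nth intro!: letter_mono)
  then have TT: "list_all2 (\<le>) (T u) (T u')" using u u' by simp
  have ul: "length u = n" "length u' = n" using u u' Tr_iff by auto
  obtain a r where ua: "u = a # r" using ul n by (cases u) auto
  obtain a' r' where ua': "u' = a' # r'" using ul n by (cases u') auto
  have "length r = length r'" using ul ua ua' by simp
  then have "list_all2 (\<le>) u u'" using TT unfolding T_def ua ua' by (auto simp: list_all2_append)
  then show ?thesis unfolding tr_le_def using rho_enc u u' n by (simp add: list_all2_conv_all_nth)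
qed

theorem proposition1p4:
  fixes n :: nat
  assumes "n \<ge> 1"
  shows "bij_betw rho (F n) (Tr n) \<and>
         (\<forall>d \<in> F n. \<forall>d' \<in> F n. dexter_le d d' \<longleftrightarrow> tr_le (rho d) (rho d'))"
proof
  have n: "1 \<le> n" using assms by simp
  show "bij_betw rho (F n) (Tr n)" unfolding bij_betw_def
  proof
    show "inj_on rho (F n)"
    proof
      fix d d' assume d: "d \<in> F n" and d': "d' \<in> F n" and r: "rho d = rho d'"
      obtain u where u: "u \<in> Tr n" "d = enc u" using F_sub[OF d n] by blast
      obtain u' where u': "u' \<in> Tr n" "d' = enc u'" using F_sub[OF d' n] by blast
      have "u = u'" using r u u' rho_enc n by metis
      then show "d = d'" using u u' by simp
    qed
    show "rho ` F n = Tr n"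
    proof
      show "rho ` F n \<subseteq> Tr n"
      proof
        fix x assume "x \<in> rho ` F n"
        then obtain d where d: "d \<in> F n" "x = rho d" by blast
        obtain u where u: "u \<in> Tr n" "d = enc u" using F_sub[OF d(1) n] by blast
        then show "x \<in> Tr n" using d rho_enc n by simp
      qed
      show "Tr n \<subseteq> rho ` F n"
      proof
        fix u assume u: "u \<in> Tr n"
        then have "rho (enc u) = u" using rho_enc n by simp
        then show "u \<in> rho ` F n" using enc_F[OF u n] by force
      qed
    qed
  qed
  show "\<forall>d \<in> F n. \<forall>d' \<in> F n. dexter_le d d' \<longleftrightarrow> tr_le (rho d) (rho d')"
  proof (intro ballI iffI)
    fix d d' assume d: "d \<in> F n" and d': "d' \<in> F n"
    {
      assume "dexter_le d d'"
      then show "tr_le (rho d) (rho d')" using order_fwd d d' n by blast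
    next
      assume t: "tr_le (rho d) (rho d')"
      obtain u where u: "u \<in> Tr n" "d = enc u" using F_sub[OF d n] by blast
      obtain u' where u': "u' \<in> Tr n" "d' = enc u'" using F_sub[OF d' n] by blast
      have "tr_le u u'" using t u u' rho_enc n by simp
      then have "list_all2 (\<le>) u u'" unfolding tr_le_def by (simp add: list_all2_conv_all_nth)
      then show "dexter_le d d'" using chain u u' by simp
    }
  qed
qed


end
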